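(* Fix $0<p<1$ and define $m(z)=\langle\phi,(zI-K_\infty)^{-1}\phi\rangle$. Then for every $z\in\mathbb C$ with $|z|>\|K_\infty\|+1$, $$m(z)=\frac{m(z/p)}{1-m(z/p)}+\frac{m(z/(1-p))}{\big(1-m(z/p)\big)\big(1-m(z/p)-m(z/(1-p))\big)}.$$
   Context: Let $S_0(x)=x/3$, $S_2(x)=(x+2)/3$ on $[0,1]$ and let $C$ be the middle-third Cantor set. For $0<p<1$, $\mu_p$ is the unique Borel probability measure on $[0,1]$ with $\mu_p=p\,\mu_p\circ S_0^{-1}+(1-p)\,\mu_p\circ S_2^{-1}$. For words $w\in\{0,2\}^n$, $S_w=S_{w_1}\circ\cdots\circ S_{w_n}$ ($S_\varnothing=\mathrm{id}$), $C_w=S_w(C)$. Inner product $\langle f,g\rangle=\int\overline fg\,d\mu_p$; $\phi=1_C$. $K_mf=\sum_{|u|\le m}\langle1_{C_u},f\rangle1_{C_u}$ and $K_\infty=\lim_{m\to\infty}K_m$ in operator norm (this limit exists and is compact, positive, self-adjoint). *)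

theory Defs
  imports "HOL-Probability.Probability"
begin

definition S0 :: "real \<Rightarrow> real" where "S0 x = x / 3"
definition S2 :: "real \<Rightarrow> real" where "S2 x = (x + 2) / 3"

definition Sl :: "nat \<Rightarrow> real \<Rightarrow> real" where
  "Sl i = (if i = 0 then S0 else S2)"

definition words :: "nat \<Rightarrow> nat list set" where
  "words n = {w. set w \<subseteq> {0, 2} \<and> length w = n}"

fun Sw :: "nat list \<Rightarrow> real \<Rightarrow> real" where
  "Sw [] = id"
| "Sw (i # w) = Sl i \<circ> Sw w"

definition Cantor :: "real set" where
  "Cantor = (\<Inter>n. \<Union>w\<in>words n. Sw w ` {0..1})"

definition Cw :: "nat list \<Rightarrow> real set" where
  "Cw w = Sw w ` Cantor"

definition is_mu :: "real \<Rightarrow> real measure \<Rightarrow> bool" where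
  "is_mu p M \<longleftrightarrow> sets M = sets (restrict_space borel {0..1::real})
     \<and> space M = {0..1} \<and> prob_space M
     \<and> (\<forall>A\<in>sets M. emeasure M A =
            ennreal p * emeasure M (S0 -` A \<inter> space M)
          + ennreal (1 - p) * emeasure M (S2 -` A \<inter> space M))"

definition mu :: "real \<Rightarrow> real measure" where
  "mu p = (THE M. is_mu p M)"

definition inner_mu :: "real \<Rightarrow> (real \<Rightarrow> complex) \<Rightarrow> (real \<Rightarrow> complex) \<Rightarrow> complex" where
  "inner_mu p f g = (LINT x|mu p. cnj (f x) * g x)"

definition L2 :: "real \<Rightarrow> (real \<Rightarrow> complex) \<Rightarrow> bool" where
  "L2 p f \<longleftrightarrow> f \<in> borel_measurable (mu p) \<and> integrable (mu p) (\<lambda>x. (cmod (f x))\<^sup>2)"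

definition L2norm :: "real \<Rightarrow> (real \<Rightarrow> complex) \<Rightarrow> real" where
  "L2norm p f = sqrt (LINT x|mu p. (cmod (f x))\<^sup>2)"

definition phi :: "real \<Rightarrow> complex" where
  "phi = indicator Cantor"

definition Km :: "real \<Rightarrow> nat \<Rightarrow> (real \<Rightarrow> complex) \<Rightarrow> (real \<Rightarrow> complex)" where
  "Km p m f = (\<lambda>x. \<Sum>u\<in>(\<Union>n\<le>m. words n).
                  inner_mu p (indicator (Cw u)) f * indicator (Cw u) x)"

definition is_Kinf :: "real \<Rightarrow> ((real \<Rightarrow> complex) \<Rightarrow> (real \<Rightarrow> complex)) \<Rightarrow> bool" where
  "is_Kinf p K \<longleftrightarrow> (\<forall>f. L2 p f \<longrightarrow> L2 p (K f)) \<and>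
     (\<forall>\<epsilon>>0. \<exists>N. \<forall>m\<ge>N. \<forall>f. L2 p f \<longrightarrow>
        L2norm p (\<lambda>x. Km p m f x - K f x) \<le> \<epsilon> * L2norm p f)"

definition opnorm :: "real \<Rightarrow> ((real \<Rightarrow> complex) \<Rightarrow> (real \<Rightarrow> complex)) \<Rightarrow> real" where
  "opnorm p K = Inf {c. 0 \<le> c \<and> (\<forall>f. L2 p f \<longrightarrow> L2norm p (K f) \<le> c * L2norm p f)}"

text \<open>m(z) = <phi, (zI - K)^{-1} phi>, with (zI-K)^{-1} phi the (a.e. unique) L^2
  solution g of z g - K g = phi.\<close>
definition mfun :: "real \<Rightarrow> ((real \<Rightarrow> complex) \<Rightarrow> (real \<Rightarrow> complex)) \<Rightarrow> complex \<Rightarrow> complex" where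
  "mfun p K z = (THE c. \<exists>g. L2 p g \<and> (AE x in mu p. z * g x - K g x = phi x)
                         \<and> c = inner_mu p phi g)"

end

theory Submission
  imports Defs "HOL-Probability.Probability"
begin

section \<open>Cantor set basics\<close>

lemma words_0: "words 0 = {[]}"
  by (auto simp: words_def)

lemma words_Suc: "words (Suc n) = (\<lambda>w. 0#w) ` words n \<union> (\<lambda>w. 2#w) ` words n"
  by (auto simp: words_def length_Suc_conv)

lemma finite_words: "finite (words n)"
  by (induction n) (auto simp: words_0 words_Suc)

definition E :: "nat \<Rightarrow> real set" where
  "E n = (\<Union>w\<in>words n. Sw w ` {0..1})"

lemma E_0: "E 0 = {0..1}"
  by (simp add: E_def words_0)

lemma E_Suc: "E (Suc n) = S0 ` E n \<union> S2 ` E n"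
  by (auto simp: E_def words_Suc image_UN image_comp Sl_def)

lemma S0_I: "x \<in> {0..1} \<Longrightarrow> S0 x \<in> {0..1}" by (auto simp: S0_def)
lemma S2_I: "x \<in> {0..1} \<Longrightarrow> S2 x \<in> {0..1}" by (auto simp: S2_def)

lemma E_sub: "E n \<subseteq> {0..1}"
proof (induction n)
  case 0 then show ?case by (simp add: E_0)
next
  case (Suc n) then show ?case using S0_I S2_I by (auto simp: E_Suc)
qed

lemma Cantor_eq: "Cantor = (\<Inter>n. E n)"
  by (simp add: Cantor_def E_def)

lemma Cantor_sub: "Cantor \<subseteq> {0..1}"
  using E_0 Cantor_eq by auto

lemma S0_Cantor: "y \<in> Cantor \<Longrightarrow> S0 y \<in> Cantor"
proof -
  assume y: "y \<in> Cantor"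
  have "S0 y \<in> E n" for n
  proof (cases n)
    case 0 then show ?thesis using y Cantor_sub S0_I by (auto simp: E_0)
  next
    case (Suc m) then show ?thesis using y by (auto simp: E_Suc Cantor_eq)
  qed
  then show ?thesis by (simp add: Cantor_eq)
qed

lemma S2_Cantor: "y \<in> Cantor \<Longrightarrow> S2 y \<in> Cantor"
proof -
  assume y: "y \<in> Cantor"
  have "S2 y \<in> E n" for n
  proof (cases n)
    case 0 then show ?thesis using y Cantor_sub S2_I by (auto simp: E_0)
  next
    case (Suc m) then show ?thesis using y by (auto simp: E_Suc Cantor_eq)
  qed
  then show ?thesis by (simp add: Cantor_eq)
qed

lemma Cantor_split: "Cantor = S0 ` Cantor \<union> S2 ` Cantor"
proof
  show "S0 ` Cantor \<union> S2 ` Cantor \<subseteq> Cantor" using S0_Cantor S2_Cantor by auto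
  show "Cantor \<subseteq> S0 ` Cantor \<union> S2 ` Cantor"
  proof
    fix x assume x: "x \<in> Cantor"
    then have xE: "x \<in> S0 ` E n \<union> S2 ` E n" for n
      using E_Suc[of n] by (auto simp: Cantor_eq)
    show "x \<in> S0 ` Cantor \<union> S2 ` Cantor"
    proof (cases "x \<le> 1/2")
      case True
      have "3 * x \<in> E n" for n
      proof -
        have "x \<notin> S2 ` E n" using True E_sub[of n] by (auto simp: S2_def)
        then obtain y where "y \<in> E n" "x = S0 y" using xE[of n] by auto
        then show ?thesis by (auto simp: S0_def mult.commute)
      qed
      then have "3 * x \<in> Cantor" by (simp add: Cantor_eq)
      moreover have "x = S0 (3 * x)" by (simp add: S0_def)
      ultimately show ?thesis by blast
    next
      case False
      have "3 * x - 2 \<in> E n" for n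
      proof -
        have "x \<notin> S0 ` E n" using False E_sub[of n] by (auto simp: S0_def)
        then obtain y where "y \<in> E n" "x = S2 y" using xE[of n] by auto
        then have "3 * x - 2 = y" by (simp add: S2_def)
        then show ?thesis using \<open>y \<in> E n\<close> by simp
      qed
      then have "3 * x - 2 \<in> Cantor" by (simp add: Cantor_eq)
      moreover have "x = S2 (3 * x - 2)" by (simp add: S2_def)
      ultimately show ?thesis by blast
    qed
  qed
qed

lemma continuous_Sw: "continuous_on UNIV (Sw w)"
proof (induction w)
  case Nil then show ?case by (simp add: continuous_on_id)
next
  case (Cons i w)
  have "continuous_on UNIV (Sl i)"
    by (auto simp: Sl_def S0_def S2_def intro!: continuous_intros)
  then show ?case using Cons
    by (auto intro: continuous_on_compose2[where t=UNIV])
qed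

lemma compact_E: "compact (E n)"
  unfolding E_def
  by (intro compact_UN finite_words compact_continuous_image
        continuous_on_subset[OF continuous_Sw]) auto

lemma compact_Cantor: "compact Cantor"
proof -
  have "closed Cantor" unfolding Cantor_eq
    using compact_E by (intro closed_INT) (auto intro: compact_imp_closed)
  moreover have "bounded Cantor" using Cantor_sub bounded_closed_interval bounded_subset by blast
  ultimately show ?thesis using compact_eq_bounded_closed by blast
qed

lemma Cw_Nil: "Cw [] = Cantor" by (simp add: Cw_def)
lemma Cw_Cons: "Cw (i#w) = Sl i ` Cw w" by (simp add: Cw_def image_comp)

lemma compact_Cw: "compact (Cw w)"
  unfolding Cw_def
  by (intro compact_continuous_image continuous_on_subset[OF continuous_Sw] compact_Cantor) auto

lemma Cw_borel[measurable]: "Cw w \<in> sets borel"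
  using compact_Cw by (simp add: compact_imp_closed borel_closed)

lemma Cantor_borel[measurable]: "Cantor \<in> sets borel"
  using compact_Cantor by (simp add: compact_imp_closed borel_closed)

lemma Cw_Cantor: "Cw w \<subseteq> Cantor"
proof (induction w)
  case Nil then show ?case by (simp add: Cw_Nil)
next
  case (Cons i w) then show ?case
    using S0_Cantor S2_Cantor by (auto simp: Cw_Cons Sl_def)
qed

lemma Cw_sub: "Cw w \<subseteq> {0..1}"
  using Cw_Cantor Cantor_sub by blast


section \<open>Existence of mu_p\<close>

abbreviation RI :: "real measure" where "RI \<equiv> restrict_space borel {0..1::real}"

lemma S0_meas[measurable]: "S0 \<in> borel_measurable borel"
  unfolding S0_def by measurable
lemma S2_meas[measurable]: "S2 \<in> borel_measurable borel"
  unfolding S2_def by measurable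

lemma S0_RI: "S0 \<in> measurable RI RI"
  by (intro measurable_restrict_space3 S0_meas) (auto simp: S0_def)
lemma S2_RI: "S2 \<in> measurable RI RI"
  by (intro measurable_restrict_space3 S2_meas) (auto simp: S2_def)

definition dig :: "bool \<Rightarrow> real" where "dig b = (if b then 0 else 2)"

definition Xs :: "bool stream \<Rightarrow> real" where
  "Xs \<omega> = (\<Sum>n. dig (\<omega> !! n) / 3 ^ Suc n)"

lemma dig_bounds: "0 \<le> dig b" "dig b \<le> 2" by (auto simp: dig_def)

lemma summable_geo3: "summable (\<lambda>n. 2 / (3::real) ^ Suc n)"
proof -
  have "summable (\<lambda>n. (2/3) * (1/3::real) ^ n)"
    by (intro summable_mult summable_geometric) auto
  then show ?thesis by (simp add: power_divide field_simps)
qed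

lemma sum_geo3: "(\<Sum>n. 2 / (3::real) ^ Suc n) = 1"
proof -
  have "(\<lambda>n. (2/3) * (1/3::real) ^ n) sums ((2/3) * (1 / (1 - 1/3)))"
    by (intro sums_mult geometric_sums) auto
  then have "(\<lambda>n. 2 / (3::real) ^ Suc n) sums 1" by (simp add: power_divide field_simps)
  then show ?thesis by (simp add: sums_iff)
qed

lemma summable_Xs: "summable (\<lambda>n. dig (\<omega> !! n) / 3 ^ Suc n)"
  by (rule summable_comparison_test'[OF summable_geo3, of 0])
     (auto simp: dig_bounds divide_right_mono)

lemma Xs_bounds: "0 \<le> Xs \<omega>" "Xs \<omega> \<le> 1"
proof -
  show "0 \<le> Xs \<omega>" unfolding Xs_def
    by (intro suminf_nonneg summable_Xs) (auto simp: dig_bounds)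
  have "Xs \<omega> \<le> (\<Sum>n. 2 / (3::real) ^ Suc n)" unfolding Xs_def
    by (intro suminf_le summable_Xs summable_geo3) (auto simp: dig_bounds divide_right_mono)
  then show "Xs \<omega> \<le> 1" using sum_geo3 by linarith
qed

lemma Xs_Stream: "Xs (b ## \<omega>) = (if b then S0 else S2) (Xs \<omega>)"
proof -
  have h: "(\<Sum>n. dig ((b ## \<omega>) !! Suc n) / 3 ^ Suc (Suc n)) = Xs (b ## \<omega>) - dig b / 3"
    using suminf_split_head[OF summable_Xs[of "b ## \<omega>"]] by (simp add: Xs_def)
  have "Xs (b ## \<omega>) = dig b / 3 + (\<Sum>n. dig (\<omega> !! n) / 3 ^ Suc (Suc n))"
    using h by simp
  also have "(\<Sum>n. dig (\<omega> !! n) / 3 ^ Suc (Suc n)) = (\<Sum>n. (1/3) * (dig (\<omega> !! n) / 3 ^ Suc n))"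
    by simp
  also have "\<dots> = (1/3) * Xs \<omega>" unfolding Xs_def by (rule suminf_mult[OF summable_Xs])
  finally show ?thesis by (auto simp: dig_def S0_def S2_def)
qed

lemma Xs_meas[measurable]: "Xs \<in> borel_measurable (stream_space (measure_pmf (bernoulli_pmf p)))"
  unfolding Xs_def by measurable

lemma Xs_RI: "Xs \<in> measurable (stream_space (measure_pmf (bernoulli_pmf p))) RI"
  by (intro measurable_restrict_space2 Xs_meas) (auto simp: Xs_bounds)

lemma is_mu_exists:
  assumes p: "0 < p" "p < 1"
  shows "\<exists>M. is_mu p M"
proof -
  define B where "B = measure_pmf (bernoulli_pmf p)"
  define SS where "SS = stream_space B"
  define M0 where "M0 = distr SS RI Xs"
  interpret B: prob_space B unfolding B_def by (rule prob_space_measure_pmf)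
  have XsR: "Xs \<in> measurable SS RI" unfolding SS_def B_def by (rule Xs_RI)
  have sets: "sets M0 = sets RI" by (simp add: M0_def)
  have space: "space M0 = {0..1}" by (simp add: M0_def space_restrict_space)
  have prob: "prob_space M0" unfolding M0_def SS_def
    by (intro prob_space.prob_space_distr B.prob_space_stream_space XsR[unfolded SS_def])
  have eq: "emeasure M0 A = ennreal p * emeasure M0 (S0 -` A \<inter> space M0)
          + ennreal (1 - p) * emeasure M0 (S2 -` A \<inter> space M0)" if A: "A \<in> sets M0" for A
  proof -
    have AR: "A \<in> sets RI" using A sets by simp
    have ind_meas: "(\<lambda>\<omega>. indicator A (Xs \<omega>) :: ennreal) \<in> borel_measurable SS"
      using XsR AR by measurable
    have pre: "\<And>S. S \<in> measurable RI RI \<Longrightarrow> S -` A \<inter> space M0 \<in> sets RI"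
      using AR space by (metis measurable_sets sets sets_eq_imp_space_eq)
    have inner: "(\<integral>\<^sup>+\<omega>. indicator A (S (Xs \<omega>)) \<partial>SS) = emeasure M0 (S -` A \<inter> space M0)"
      if S: "S \<in> measurable RI RI" for S
    proof -
      have "(\<integral>\<^sup>+\<omega>. indicator A (S (Xs \<omega>)) \<partial>SS)
          = (\<integral>\<^sup>+\<omega>. indicator (S -` A \<inter> space M0) (Xs \<omega>) \<partial>SS)"
        by (intro nn_integral_cong) (auto simp: space Xs_bounds split: split_indicator)
      also have "\<dots> = (\<integral>\<^sup>+x. indicator (S -` A \<inter> space M0) x \<partial>M0)"
      proof -
        have m: "indicator (S -` A \<inter> space M0) \<in> (borel_measurable (distr SS RI Xs) :: (real \<Rightarrow> ennreal) set)"
          using pre[OF S] by (intro borel_measurable_indicator) simp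
        show ?thesis using nn_integral_distr[OF XsR m] by (simp add: M0_def[symmetric])
      qed
      also have "\<dots> = emeasure M0 (S -` A \<inter> space M0)"
        using pre[OF S] sets by (simp add: nn_integral_indicator)
      finally show ?thesis .
    qed
    have "emeasure M0 A = (\<integral>\<^sup>+x. indicator A x \<partial>M0)"
      using A by (simp add: nn_integral_indicator)
    also have "\<dots> = (\<integral>\<^sup>+\<omega>. indicator A (Xs \<omega>) \<partial>SS)"
      unfolding M0_def using AR XsR by (subst nn_integral_distr) auto
    also have "\<dots> = (\<integral>\<^sup>+b. (\<integral>\<^sup>+\<omega>. indicator A (Xs (b ## \<omega>)) \<partial>SS) \<partial>B)"
      unfolding SS_def by (rule B.nn_integral_stream_space) (use ind_meas SS_def in simp)
    also have "\<dots> = (\<integral>\<^sup>+b. (\<integral>\<^sup>+\<omega>. indicator A ((if b then S0 else S2) (Xs \<omega>)) \<partial>SS) \<partial>B)"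
      by (simp add: Xs_Stream)
    also have "\<dots> = (\<integral>\<^sup>+\<omega>. indicator A (S0 (Xs \<omega>)) \<partial>SS) * p
                   + (\<integral>\<^sup>+\<omega>. indicator A (S2 (Xs \<omega>)) \<partial>SS) * (1 - p)"
      unfolding B_def using p by (subst nn_integral_bernoulli_pmf) auto
    also have "\<dots> = ennreal p * emeasure M0 (S0 -` A \<inter> space M0)
          + ennreal (1 - p) * emeasure M0 (S2 -` A \<inter> space M0)"
      using inner[OF S0_RI] inner[OF S2_RI] by (simp add: mult.commute)
    finally show ?thesis .
  qed
  have "is_mu p M0" unfolding is_mu_def using sets space prob eq by blast
  then show ?thesis by blast
qed


section \<open>Uniqueness of mu_p\<close>

lemma sets_RI_iff: "A \<in> sets RI \<longleftrightarrow> A \<subseteq> {0..1} \<and> A \<in> sets borel"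
  by (subst sets_restrict_space_iff) auto

lemma is_muD:
  assumes "is_mu p M"
  shows "sets M = sets RI" "space M = {0..1}" "prob_space M"
    "\<And>A. A \<in> sets M \<Longrightarrow> emeasure M A = ennreal p * emeasure M (S0 -` A \<inter> space M)
          + ennreal (1 - p) * emeasure M (S2 -` A \<inter> space M)"
  using assms unfolding is_mu_def by auto

lemma meas_mu:
  assumes "is_mu p M" "f \<in> measurable borel N"
  shows "f \<in> measurable M N"
proof -
  have "f \<in> measurable RI N" by (rule measurable_restrict_space1[OF assms(2)])
  then show ?thesis using measurable_cong_sets[OF is_muD(1)[OF assms(1)] refl, of N] by simp
qed

definition FF :: "real measure \<Rightarrow> real \<Rightarrow> real" where
  "FF M x = measure M ({..x} \<inter> {0..1})"

lemma FF_eq: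
  assumes p: "0 < p" "p < 1" and M: "is_mu p M"
  shows "FF M x = p * FF M (3*x) + (1-p) * FF M (3*x-2)"
proof -
  interpret prob_space M using is_muD[OF M] by simp
  have sp: "space M = {0..1}" using is_muD[OF M] by simp
  have inM: "{..t} \<inter> {0..1} \<in> sets M" for t :: real
    using is_muD(1)[OF M] by (simp add: sets_RI_iff)
  have e1: "S0 -` ({..x} \<inter> {0..1}) \<inter> space M = {..3*x} \<inter> {0..1}"
    by (auto simp: sp S0_def)
  have e2: "S2 -` ({..x} \<inter> {0..1}) \<inter> space M = {..3*x-2} \<inter> {0..1}"
    by (auto simp: sp S2_def)
  have "ennreal (FF M x) = ennreal p * ennreal (FF M (3*x)) + ennreal (1-p) * ennreal (FF M (3*x-2))"
    using is_muD(4)[OF M inM[of x]] unfolding e1 e2 FF_def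
    by (simp add: emeasure_eq_measure)
  also have "\<dots> = ennreal (p * FF M (3*x) + (1-p) * FF M (3*x-2))"
    using p by (simp add: ennreal_mult ennreal_plus FF_def)
  finally show ?thesis using p by (subst (asm) ennreal_inj) (auto simp: FF_def)
qed

lemma FF_neg: "x < 0 \<Longrightarrow> FF M x = 0"
  unfolding FF_def by (subgoal_tac "{..x} \<inter> {0..1} = {}") auto

lemma FF_ge1:
  assumes M: "is_mu p M" and x: "1 \<le> x" shows "FF M x = 1"
proof -
  interpret prob_space M using is_muD[OF M] by simp
  have "{..x} \<inter> {0..1} = space M" using x is_muD(2)[OF M] by auto
  then show ?thesis unfolding FF_def by (simp add: prob_space)
qed

lemma FF_bounds: "is_mu p M \<Longrightarrow> 0 \<le> FF M x \<and> FF M x \<le> 1"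
  using prob_space.prob_le_1[OF is_muD(3)] unfolding FF_def by auto

lemma FF_unique:
  assumes p: "0 < p" "p < 1" and M1: "is_mu p M1" and M2: "is_mu p M2"
  shows "FF M1 x = FF M2 x"
proof -
  define q where "q = max p (1-p)"
  have q: "0 \<le> q" "q < 1" "p \<le> q" "1 - p \<le> q" using p by (auto simp: q_def)
  define d where "d t = FF M1 t - FF M2 t" for t
  have dz: "d t = 0" if "t < 0 \<or> 1 \<le> t" for t
    using that FF_neg FF_ge1[OF M1] FF_ge1[OF M2] by (auto simp: d_def)
  have deq: "d t = p * d (3*t) + (1-p) * d (3*t-2)" for t
    using FF_eq[OF p M1, of t] FF_eq[OF p M2, of t] by (simp add: d_def algebra_simps)
  have bound: "\<forall>t. \<bar>d t\<bar> \<le> q ^ n" for n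
  proof (induction n)
    case 0 show ?case
    proof
      fix t show "\<bar>d t\<bar> \<le> q ^ 0"
        using FF_bounds[OF M1, of t] FF_bounds[OF M2, of t] by (simp add: d_def abs_le_iff)
    qed
  next
    case (Suc n)
    show ?case
    proof
      fix t
      show "\<bar>d t\<bar> \<le> q ^ Suc n"
      proof (cases "3*t < 1")
        case True
        then have "d t = p * d (3*t)" using deq[of t] dz[of "3*t-2"] by simp
        then have "\<bar>d t\<bar> = p * \<bar>d (3*t)\<bar>" using p by (simp add: abs_mult)
        also have "\<dots> \<le> q * q ^ n" using Suc[rule_format, of "3*t"] p q
          by (intro mult_mono) auto
        finally show ?thesis by simp
      next
        case False
        then have "d t = (1-p) * d (3*t-2)" using deq[of t] dz[of "3*t"] by simp
        then have "\<bar>d t\<bar> = (1-p) * \<bar>d (3*t-2)\<bar>" using p by (simp add: abs_mult)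
        also have "\<dots> \<le> q * q ^ n" using Suc[rule_format, of "3*t-2"] p q
          by (intro mult_mono) auto
        finally show ?thesis by simp
      qed
    qed
  qed
  have "(\<lambda>n. q ^ n) \<longlonglongrightarrow> 0" using q by (intro LIMSEQ_power_zero) auto
  then have "\<bar>d x\<bar> \<le> 0" using bound
    by (intro LIMSEQ_le_const[of "\<lambda>n. q^n"]) auto
  then show ?thesis by (simp add: d_def)
qed

lemma is_mu_unique:
  assumes p: "0 < p" "p < 1" and M1: "is_mu p M1" and M2: "is_mu p M2"
  shows "M1 = M2"
proof -
  have rd: "real_distribution (distr M borel id)" if M: "is_mu p M" for M
  proof -
    have "prob_space (distr M borel id)"
      by (intro prob_space.prob_space_distr is_muD(3)[OF M] meas_mu[OF M] measurable_ident)
    then show ?thesis by (auto simp: real_distribution_def real_distribution_axioms_def)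
  qed
  have cdf: "cdf (distr M borel id) x = FF M x" if M: "is_mu p M" for M x
  proof -
    have "cdf (distr M borel id) x = measure M (id -` {..x} \<inter> space M)"
      unfolding cdf_def by (subst measure_distr) (auto intro: meas_mu[OF M measurable_ident])
    then show ?thesis using is_muD(2)[OF M] by (simp add: FF_def)
  qed
  have "distr M1 borel id = distr M2 borel id"
    by (intro cdf_unique rd M1 M2 ext) (simp add: cdf[OF M1] cdf[OF M2] FF_unique[OF p M1 M2])
  have em: "emeasure M A = emeasure (distr M borel id) A" if M: "is_mu p M" and A: "A \<in> sets M" for M A
  proof -
    have "A \<in> sets borel" "A \<subseteq> space M" using A is_muD(1,2)[OF M] by (auto simp: sets_RI_iff)
    then show ?thesis by (subst emeasure_distr) (auto intro: meas_mu[OF M measurable_ident] simp: Int_absorb2)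
  qed
  show ?thesis
  proof (rule measure_eqI)
    show "sets M1 = sets M2" using is_muD(1)[OF M1] is_muD(1)[OF M2] by simp
    fix A assume "A \<in> sets M1"
    moreover then have "A \<in> sets M2" using is_muD(1)[OF M1] is_muD(1)[OF M2] by simp
    ultimately show "emeasure M1 A = emeasure M2 A"
      using em[OF M1] em[OF M2] \<open>distr M1 borel id = distr M2 borel id\<close> by simp
  qed
qed

lemma is_mu_mu: "0 < p \<Longrightarrow> p < 1 \<Longrightarrow> is_mu p (mu p)"
  unfolding mu_def using is_mu_exists is_mu_unique by (metis theI)


locale cm =
  fixes p :: real
  assumes p0: "0 < p" and p1: "p < 1"
begin

lemma M: "is_mu p (mu p)" using is_mu_mu p0 p1 by simp

sublocale P: prob_space "mu p" using is_muD(3)[OF M] .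

lemma sets_M: "sets (mu p) = sets RI" using is_muD(1)[OF M] .
lemma space_M: "space (mu p) = {0..1}" using is_muD(2)[OF M] .

lemma meas_M: "f \<in> measurable borel N \<Longrightarrow> f \<in> measurable (mu p) N"
  using meas_mu[OF M] .

lemma RI_M: "f \<in> measurable RI RI \<Longrightarrow> f \<in> measurable (mu p) (mu p)"
  using measurable_cong_sets[OF sets_M sets_M] by simp

lemma S0_M[measurable]: "S0 \<in> measurable (mu p) (mu p)" using RI_M[OF S0_RI] .
lemma S2_M[measurable]: "S2 \<in> measurable (mu p) (mu p)" using RI_M[OF S2_RI] .

lemma S0_space: "y \<in> space (mu p) \<Longrightarrow> S0 y \<in> space (mu p)"
  using S0_I by (simp add: space_M)
lemma S2_space: "y \<in> space (mu p) \<Longrightarrow> S2 y \<in> space (mu p)"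
  using S2_I by (simp add: space_M)

lemma cv_nn:
  fixes f :: "real \<Rightarrow> ennreal"
  assumes f: "f \<in> borel_measurable (mu p)"
  shows "(\<integral>\<^sup>+x. f x \<partial>mu p) = ennreal p * (\<integral>\<^sup>+y. f (S0 y) \<partial>mu p)
           + ennreal (1-p) * (\<integral>\<^sup>+y. f (S2 y) \<partial>mu p)"
  using f
proof (induction rule: borel_measurable_induct)
  case (cong f g)
  have "(\<integral>\<^sup>+x. f x \<partial>mu p) = (\<integral>\<^sup>+x. g x \<partial>mu p)"
    using cong by (intro nn_integral_cong) auto
  moreover have "(\<integral>\<^sup>+y. f (S0 y) \<partial>mu p) = (\<integral>\<^sup>+y. g (S0 y) \<partial>mu p)"
    using cong S0_space by (intro nn_integral_cong) auto
  moreover have "(\<integral>\<^sup>+y. f (S2 y) \<partial>mu p) = (\<integral>\<^sup>+y. g (S2 y) \<partial>mu p)"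
    using cong S2_space by (intro nn_integral_cong) auto
  ultimately show ?case using cong by simp
next
  case (set A)
  have i0: "(\<integral>\<^sup>+y. indicator A (S y) \<partial>mu p) = emeasure (mu p) (S -` A \<inter> space (mu p))"
    if S: "S \<in> measurable (mu p) (mu p)" for S
  proof -
    have "(\<integral>\<^sup>+y. indicator A (S y) \<partial>mu p) = (\<integral>\<^sup>+y. indicator (S -` A \<inter> space (mu p)) y \<partial>mu p)"
      by (intro nn_integral_cong) (auto split: split_indicator)
    also have "\<dots> = emeasure (mu p) (S -` A \<inter> space (mu p))"
      using measurable_sets[OF S set] by (simp add: nn_integral_indicator)
    finally show ?thesis .
  qed
  show ?case using is_muD(4)[OF M set] i0[OF S0_M] i0[OF S2_M] set
    by (simp add: nn_integral_indicator)
next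
  case (mult u c)
  have m0: "(\<lambda>y. u (S0 y)) \<in> borel_measurable (mu p)" using mult by measurable
  have m2: "(\<lambda>y. u (S2 y)) \<in> borel_measurable (mu p)" using mult by measurable
  show ?case using mult m0 m2 by (simp add: nn_integral_cmult algebra_simps)
next
  case (add u v)
  have m: "(\<lambda>y. u (S y)) \<in> borel_measurable (mu p)" "(\<lambda>y. v (S y)) \<in> borel_measurable (mu p)"
    if "S \<in> measurable (mu p) (mu p)" for S using add that by measurable
  show ?case using add m[OF S0_M] m[OF S2_M] by (simp add: nn_integral_add algebra_simps)
next
  case (seq U)
  have incU: "incseq U" using seq by blast
  have measU: "\<And>i. U i \<in> borel_measurable (mu p)" using seq by blast
  have IH: "\<And>i. (\<integral>\<^sup>+x. U i x \<partial>mu p) = ennreal p * (\<integral>\<^sup>+y. U i (S0 y) \<partial>mu p)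
           + ennreal (1-p) * (\<integral>\<^sup>+y. U i (S2 y) \<partial>mu p)" using seq by blast
  have mono: "incseq (\<lambda>i y. U i (S y))" for S using incU by (auto simp: incseq_def le_fun_def)
  have m: "(\<lambda>y. U i (S y)) \<in> borel_measurable (mu p)" if "S \<in> measurable (mu p) (mu p)" for S i
    using measU that by measurable
  have sup: "(\<integral>\<^sup>+y. (SUP i. U i) (S y) \<partial>mu p) = (SUP i. \<integral>\<^sup>+y. U i (S y) \<partial>mu p)"
    if S: "S \<in> measurable (mu p) (mu p)" for S
  proof -
    have "(\<integral>\<^sup>+y. (SUP i. U i) (S y) \<partial>mu p) = (\<integral>\<^sup>+y. (SUP i. U i (S y)) \<partial>mu p)"
      unfolding SUP_apply image_image ..
    also have "\<dots> = (SUP i. \<integral>\<^sup>+y. U i (S y) \<partial>mu p)"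
      by (rule nn_integral_monotone_convergence_SUP[OF mono m[OF S]])
    finally show ?thesis .
  qed
  have inc: "incseq (\<lambda>i. \<integral>\<^sup>+y. U i (S y) \<partial>mu p)" if "S \<in> measurable (mu p) (mu p)" for S
    using mono[of S] by (auto simp: incseq_def le_fun_def intro!: nn_integral_mono)
  have "(\<integral>\<^sup>+x. (SUP i. U i) x \<partial>mu p) = (SUP i. \<integral>\<^sup>+x. U i x \<partial>mu p)"
    using nn_integral_monotone_convergence_SUP[OF incU measU] unfolding SUP_apply image_image by simp
  also have "\<dots> = (SUP i. ennreal p * (\<integral>\<^sup>+y. U i (S0 y) \<partial>mu p)
           + ennreal (1-p) * (\<integral>\<^sup>+y. U i (S2 y) \<partial>mu p))"
    using IH by simp
  also have "\<dots> = (SUP i. ennreal p * (\<integral>\<^sup>+y. U i (S0 y) \<partial>mu p))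
           + (SUP i. ennreal (1-p) * (\<integral>\<^sup>+y. U i (S2 y) \<partial>mu p))"
    using inc[OF S0_M] inc[OF S2_M]
    by (intro ennreal_SUP_add) (auto simp: incseq_def intro: mult_left_mono)
  also have "\<dots> = ennreal p * (\<integral>\<^sup>+y. (SUP i. U i) (S0 y) \<partial>mu p)
           + ennreal (1-p) * (\<integral>\<^sup>+y. (SUP i. U i) (S2 y) \<partial>mu p)"
    by (simp only: sup[OF S0_M] sup[OF S2_M] SUP_mult_left_ennreal)
  finally show ?case .
qed

end


context cm begin

lemma cv_integrable:
  fixes F :: "real \<Rightarrow> 'b::{banach, second_countable_topology}"
  assumes F: "integrable (mu p) F" and S: "S = S0 \<or> S = S2"
  shows "integrable (mu p) (\<lambda>y. F (S y))"
proof -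
  have Fm[measurable]: "F \<in> borel_measurable (mu p)" using F by auto
  have Sm: "S \<in> measurable (mu p) (mu p)" using S by auto
  have fin: "(\<integral>\<^sup>+x. ennreal (norm (F x)) \<partial>mu p) < \<infinity>" using F by (simp add: integrable_iff_bounded)
  have eq: "(\<integral>\<^sup>+x. ennreal (norm (F x)) \<partial>mu p) = ennreal p * (\<integral>\<^sup>+y. ennreal (norm (F (S0 y))) \<partial>mu p)
           + ennreal (1-p) * (\<integral>\<^sup>+y. ennreal (norm (F (S2 y))) \<partial>mu p)"
    by (rule cv_nn) measurable
  have "ennreal p * (\<integral>\<^sup>+y. ennreal (norm (F (S0 y))) \<partial>mu p) < \<infinity>"
       "ennreal (1-p) * (\<integral>\<^sup>+y. ennreal (norm (F (S2 y))) \<partial>mu p) < \<infinity>"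
    using fin unfolding eq by (auto simp: top_unique)
  then have "(\<integral>\<^sup>+y. ennreal (norm (F (S y))) \<partial>mu p) < \<infinity>"
    using S p0 p1 by (auto simp: ennreal_mult_less_top)
  moreover have "(\<lambda>y. F (S y)) \<in> borel_measurable (mu p)"
    using Sm by measurable
  ultimately show ?thesis by (simp add: integrable_iff_bounded)
qed

lemma cv_real:
  fixes F :: "real \<Rightarrow> real"
  assumes F: "integrable (mu p) F"
  shows "integral\<^sup>L (mu p) F = p * integral\<^sup>L (mu p) (\<lambda>y. F (S0 y)) + (1-p) * integral\<^sup>L (mu p) (\<lambda>y. F (S2 y))"
proof -
  have Fm[measurable]: "F \<in> borel_measurable (mu p)" using F by auto
  have I0: "integrable (mu p) (\<lambda>y. F (S0 y))" and I2: "integrable (mu p) (\<lambda>y. F (S2 y))"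
    using cv_integrable[OF F] by auto
  have fin: "(\<integral>\<^sup>+x. ennreal (G x) \<partial>mu p) < \<infinity>" if "integrable (mu p) G" for G :: "real \<Rightarrow> real"
  proof -
    have "(\<integral>\<^sup>+x. ennreal (G x) \<partial>mu p) \<le> (\<integral>\<^sup>+x. ennreal (norm (G x)) \<partial>mu p)"
      by (intro nn_integral_mono) auto
    also have "\<dots> < \<infinity>" using that by (simp add: integrable_iff_bounded)
    finally show ?thesis .
  qed
  have part: "enn2real (\<integral>\<^sup>+x. ennreal (H x) \<partial>mu p) = p * enn2real (\<integral>\<^sup>+y. ennreal (H (S0 y)) \<partial>mu p)
     + (1-p) * enn2real (\<integral>\<^sup>+y. ennreal (H (S2 y)) \<partial>mu p)"
    if H: "integrable (mu p) H" for H :: "real \<Rightarrow> real"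
  proof -
    have Hm[measurable]: "H \<in> borel_measurable (mu p)" using H by auto
    have f0: "(\<integral>\<^sup>+y. ennreal (H (S0 y)) \<partial>mu p) < \<infinity>" and f2: "(\<integral>\<^sup>+y. ennreal (H (S2 y)) \<partial>mu p) < \<infinity>"
      using fin cv_integrable[OF H] by auto
    have "(\<integral>\<^sup>+x. ennreal (H x) \<partial>mu p) = ennreal p * (\<integral>\<^sup>+y. ennreal (H (S0 y)) \<partial>mu p)
           + ennreal (1-p) * (\<integral>\<^sup>+y. ennreal (H (S2 y)) \<partial>mu p)"
      by (rule cv_nn) measurable
    then show ?thesis using f0 f2 p0 p1
      by (simp add: enn2real_plus enn2real_mult ennreal_mult_less_top)
  qed
  have Fn: "integrable (mu p) (\<lambda>x. - F x)" using F by simp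
  show ?thesis
    unfolding real_lebesgue_integral_def[OF F] real_lebesgue_integral_def[OF I0] real_lebesgue_integral_def[OF I2]
    using part[OF F] part[OF Fn] by (simp add: algebra_simps)
qed

lemma cv_int:
  fixes F :: "real \<Rightarrow> complex"
  assumes F: "integrable (mu p) F"
  shows "integral\<^sup>L (mu p) F = p * integral\<^sup>L (mu p) (\<lambda>y. F (S0 y)) + (1-p) * integral\<^sup>L (mu p) (\<lambda>y. F (S2 y))"
proof -
  have I0: "integrable (mu p) (\<lambda>y. F (S0 y))" and I2: "integrable (mu p) (\<lambda>y. F (S2 y))"
    using cv_integrable[OF F] by auto
  have "Re (integral\<^sup>L (mu p) F) = Re (p * integral\<^sup>L (mu p) (\<lambda>y. F (S0 y)) + (1-p) * integral\<^sup>L (mu p) (\<lambda>y. F (S2 y)))"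
    using cv_real[of "\<lambda>x. Re (F x)"] F I0 I2 by simp
  moreover have "Im (integral\<^sup>L (mu p) F) = Im (p * integral\<^sup>L (mu p) (\<lambda>y. F (S0 y)) + (1-p) * integral\<^sup>L (mu p) (\<lambda>y. F (S2 y)))"
    using cv_real[of "\<lambda>x. Im (F x)"] F I0 I2 by simp
  ultimately show ?thesis by (simp add: complex_eq_iff)
qed

end


lemma borel_measurable_cnj[measurable (raw)]:
  assumes "f \<in> borel_measurable M" shows "(\<lambda>x. cnj (f x)) \<in> borel_measurable M"
proof -
  have "cnj \<in> borel_measurable borel"
    by (intro borel_measurable_continuous_onI continuous_on_cnj continuous_on_id)
  then show ?thesis using measurable_compose[OF assms] by blast
qed

lemma discr_le:
  fixes A B C :: real
  assumes h: "\<And>t. 0 \<le> t^2 * A - 2 * t * B + C" and A: "0 \<le> A" and C: "0 \<le> C"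
  shows "B^2 \<le> A * C"
proof (cases "A = 0")
  case True
  show ?thesis
  proof (rule ccontr)
    assume "\<not> B^2 \<le> A * C"
    then have "B \<noteq> 0" using True by simp
    have "0 \<le> ((C+1)/(2*B))^2 * A - 2 * ((C+1)/(2*B)) * B + C" by (rule h)
    then show False using True \<open>B \<noteq> 0\<close> by (simp add: field_simps)
  qed
next
  case False
  then have Ap: "A > 0" using A by simp
  have "0 \<le> (B/A)^2 * A - 2 * (B/A) * B + C" by (rule h)
  then have "0 \<le> (C * A - B^2) / A" using Ap by (simp add: field_simps power2_eq_square)
  then have "0 \<le> C * A - B^2" using Ap by (simp add: zero_le_divide_iff)
  then show ?thesis by (simp add: algebra_simps)
qed

context cm begin

abbreviation NN where "NN \<equiv> L2norm p"

lemma L2D: "L2 p f \<Longrightarrow> f \<in> borel_measurable (mu p)" "L2 p f \<Longrightarrow> integrable (mu p) (\<lambda>x. (cmod (f x))\<^sup>2)"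
  by (auto simp: L2_def)

lemma L2_integrable: assumes "L2 p f" shows "integrable (mu p) f"
proof (rule Bochner_Integration.integrable_bound[where f="\<lambda>x. 1 + (cmod (f x))\<^sup>2"])
  show "integrable (mu p) (\<lambda>x. 1 + (cmod (f x))\<^sup>2)" using L2D[OF assms] by simp
  show "f \<in> borel_measurable (mu p)" using L2D[OF assms] by simp
  have "t \<le> 1 + t^2" for t :: real
  proof -
    have "0 \<le> (t - 1)^2" by simp
    then have "0 \<le> t^2 + 1 - 2*t" by (simp add: power2_diff)
    moreover have "0 \<le> t^2" by simp
    ultimately show ?thesis by (cases "t \<ge> 0") linarith+
  qed
  then show "AE x in mu p. norm (f x) \<le> norm (1 + (cmod (f x))\<^sup>2)" by simp
qed

lemma L2_prod: assumes "L2 p f" "L2 p g" shows "integrable (mu p) (\<lambda>x. cnj (f x) * g x)"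
proof (rule Bochner_Integration.integrable_bound[where f="\<lambda>x. (cmod (f x))\<^sup>2 + (cmod (g x))\<^sup>2"])
  show "integrable (mu p) (\<lambda>x. (cmod (f x))\<^sup>2 + (cmod (g x))\<^sup>2)" using L2D(2)[OF assms(1)] L2D(2)[OF assms(2)] by simp
  show "(\<lambda>x. cnj (f x) * g x) \<in> borel_measurable (mu p)" proof - note [measurable] = L2D(1)[OF assms(1)] L2D(1)[OF assms(2)] show ?thesis by measurable qed
  have "a * b \<le> a^2 + b^2" if "0 \<le> a" "0 \<le> b" for a b :: real
  proof -
    have "0 \<le> (a - b)^2" by simp
    then have "0 \<le> a^2 + b^2 - 2*a*b" by (simp add: power2_diff)
    moreover have "0 \<le> a * b" using that by simp
    ultimately show ?thesis by linarith
  qed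
  then show "AE x in mu p. norm (cnj (f x) * g x) \<le> norm ((cmod (f x))\<^sup>2 + (cmod (g x))\<^sup>2)"
    by (simp add: norm_mult)
qed

lemma L2_prod_abs: assumes "L2 p f" "L2 p g" shows "integrable (mu p) (\<lambda>x. cmod (f x) * cmod (g x))"
  using integrable_norm[OF L2_prod[OF assms]] by (simp add: norm_mult)

lemma L2_add: assumes "L2 p f" "L2 p g" shows "L2 p (\<lambda>x. f x + g x)"
  unfolding L2_def
proof
  show "(\<lambda>x. f x + g x) \<in> borel_measurable (mu p)" proof - note [measurable] = L2D(1)[OF assms(1)] L2D(1)[OF assms(2)] show ?thesis by measurable qed
  show "integrable (mu p) (\<lambda>x. (cmod (f x + g x))\<^sup>2)"
  proof (rule Bochner_Integration.integrable_bound[where f="\<lambda>x. 2 * (cmod (f x))\<^sup>2 + 2 * (cmod (g x))\<^sup>2"])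
    show "integrable (mu p) (\<lambda>x. 2 * (cmod (f x))\<^sup>2 + 2 * (cmod (g x))\<^sup>2)" using L2D(2)[OF assms(1)] L2D(2)[OF assms(2)] by simp
    show "(\<lambda>x. (cmod (f x + g x))\<^sup>2) \<in> borel_measurable (mu p)" proof - note [measurable] = L2D(1)[OF assms(1)] L2D(1)[OF assms(2)] show ?thesis by measurable qed
    have "(cmod (a + b))\<^sup>2 \<le> 2 * (cmod a)\<^sup>2 + 2 * (cmod b)\<^sup>2" for a b :: complex
    proof -
      have "cmod (a + b) \<le> cmod a + cmod b" by (rule norm_triangle_ineq)
      then have "(cmod (a + b))\<^sup>2 \<le> (cmod a + cmod b)\<^sup>2" by (simp add: power_mono)
      also have "\<dots> \<le> 2 * (cmod a)\<^sup>2 + 2 * (cmod b)\<^sup>2"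
      proof -
        have "0 \<le> (cmod a - cmod b)^2" by simp
        then show ?thesis by (simp add: power2_diff power2_sum)
      qed
      finally show ?thesis .
    qed
    then show "AE x in mu p. norm ((cmod (f x + g x))\<^sup>2) \<le> norm (2 * (cmod (f x))\<^sup>2 + 2 * (cmod (g x))\<^sup>2)"
      by simp
  qed
qed

lemma L2_cmult: assumes "L2 p f" shows "L2 p (\<lambda>x. c * f x)"
  using assms unfolding L2_def by (auto simp: norm_mult power_mult_distrib)

lemma L2_minus: assumes "L2 p f" shows "L2 p (\<lambda>x. - f x)"
  using L2_cmult[OF assms, of "-1"] by simp

lemma L2_diff: assumes "L2 p f" "L2 p g" shows "L2 p (\<lambda>x. f x - g x)"
  using L2_add[OF assms(1) L2_minus[OF assms(2)]] by simp

lemma L2_bounded: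
  assumes "f \<in> borel_measurable (mu p)" "\<And>x. x \<in> space (mu p) \<Longrightarrow> cmod (f x) \<le> B"
  shows "L2 p f"
  unfolding L2_def
proof
  show "f \<in> borel_measurable (mu p)" by fact
  show "integrable (mu p) (\<lambda>x. (cmod (f x))\<^sup>2)"
  proof (rule Bochner_Integration.integrable_bound[where f="\<lambda>x. B^2"])
    show "integrable (mu p) (\<lambda>x. B^2)" by simp
    show "(\<lambda>x. (cmod (f x))\<^sup>2) \<in> borel_measurable (mu p)" using assms by measurable
    show "AE x in mu p. norm ((cmod (f x))\<^sup>2) \<le> norm (B^2)"
      using assms(2) by (auto intro!: AE_I2 power_mono)
  qed
qed

lemma L2_indicator: assumes "A \<in> sets borel" shows "L2 p (indicator A :: real \<Rightarrow> complex)"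
proof (rule L2_bounded[of _ 1])
  show "(indicator A :: real \<Rightarrow> complex) \<in> borel_measurable (mu p)"
    using assms by (intro meas_M borel_measurable_indicator)
qed (auto simp: indicator_def)

lemma L2_sum: assumes "finite I" "\<And>i. i \<in> I \<Longrightarrow> L2 p (f i)" shows "L2 p (\<lambda>x. \<Sum>i\<in>I. f i x)"
  using assms
proof (induction I rule: finite_induct)
  case empty then show ?case by (intro L2_bounded[of _ 0]) auto
next
  case (insert i I) then show ?case by (simp add: L2_add)
qed

lemma NN_nonneg: "0 \<le> NN f" by (simp add: L2norm_def)

lemma NN_sq: "L2 p f \<Longrightarrow> (NN f)^2 = (LINT x|mu p. (cmod (f x))\<^sup>2)"
  by (simp add: L2norm_def)

lemma CS_abs:
  assumes f: "L2 p f" and g: "L2 p g"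
  shows "(LINT x|mu p. cmod (f x) * cmod (g x)) \<le> NN f * NN g"
proof -
  define A where "A = (LINT x|mu p. (cmod (f x))\<^sup>2)"
  define B where "B = (LINT x|mu p. cmod (f x) * cmod (g x))"
  define C where "C = (LINT x|mu p. (cmod (g x))\<^sup>2)"
  have iA: "integrable (mu p) (\<lambda>x. (cmod (f x))\<^sup>2)" and iC: "integrable (mu p) (\<lambda>x. (cmod (g x))\<^sup>2)"
    using L2D f g by auto
  have iB: "integrable (mu p) (\<lambda>x. cmod (f x) * cmod (g x))" using L2_prod_abs f g .
  have "0 \<le> t^2 * A - 2 * t * B + C" for t
  proof -
    have "0 \<le> (LINT x|mu p. (t * cmod (f x) - cmod (g x))\<^sup>2)" by simp
    also have "(LINT x|mu p. (t * cmod (f x) - cmod (g x))\<^sup>2)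
       = (LINT x|mu p. t^2 * (cmod (f x))\<^sup>2 - 2 * t * (cmod (f x) * cmod (g x)) + (cmod (g x))\<^sup>2)"
      by (rule Bochner_Integration.integral_cong[OF refl]) (simp add: power2_eq_square algebra_simps)
    also have "\<dots> = (LINT x|mu p. t^2 * (cmod (f x))\<^sup>2 - 2 * t * (cmod (f x) * cmod (g x))) + C"
      unfolding C_def using iA iB iC by (intro Bochner_Integration.integral_add) auto
    also have "(LINT x|mu p. t^2 * (cmod (f x))\<^sup>2 - 2 * t * (cmod (f x) * cmod (g x)))
        = (LINT x|mu p. t^2 * (cmod (f x))\<^sup>2) - (LINT x|mu p. 2 * t * (cmod (f x) * cmod (g x)))"
      using iA iB iC by (intro Bochner_Integration.integral_diff) auto
    also have "(LINT x|mu p. t^2 * (cmod (f x))\<^sup>2) = t^2 * A"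
      unfolding A_def by (rule integral_mult_right_zero)
    also have "(LINT x|mu p. 2 * t * (cmod (f x) * cmod (g x))) = 2 * t * B"
      unfolding B_def by (rule integral_mult_right_zero)
    finally show ?thesis .
  qed
  moreover have "0 \<le> A" "0 \<le> C" by (simp_all add: A_def C_def)
  ultimately have "B^2 \<le> A * C" by (rule discr_le)
  then have "sqrt (B^2) \<le> sqrt (A * C)" by (rule real_sqrt_le_mono)
  moreover have "0 \<le> B" by (simp add: B_def)
  ultimately have "B \<le> sqrt A * sqrt C" by (simp add: real_sqrt_mult)
  then show ?thesis by (simp add: B_def A_def C_def L2norm_def)
qed

lemma inner_bound:
  assumes f: "L2 p f" and g: "L2 p g"
  shows "cmod (inner_mu p f g) \<le> NN f * NN g"
proof -
  have "cmod (inner_mu p f g) \<le> (LINT x|mu p. cmod (cnj (f x) * g x))"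
    unfolding inner_mu_def by (rule integral_norm_bound)
  also have "\<dots> = (LINT x|mu p. cmod (f x) * cmod (g x))" by (simp add: norm_mult)
  also have "\<dots> \<le> NN f * NN g" by (rule CS_abs[OF f g])
  finally show ?thesis .
qed

lemma Mink:
  assumes f: "L2 p f" and g: "L2 p g"
  shows "NN (\<lambda>x. f x + g x) \<le> NN f + NN g"
proof -
  have iA: "integrable (mu p) (\<lambda>x. (cmod (f x))\<^sup>2)" and iC: "integrable (mu p) (\<lambda>x. (cmod (g x))\<^sup>2)"
    using L2D f g by auto
  have iB: "integrable (mu p) (\<lambda>x. cmod (f x) * cmod (g x))" using L2_prod_abs f g .
  have iS: "integrable (mu p) (\<lambda>x. (cmod (f x + g x))\<^sup>2)" using L2D(2)[OF L2_add[OF f g]] .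
  have "(LINT x|mu p. (cmod (f x + g x))\<^sup>2) \<le> (LINT x|mu p. (cmod (f x))\<^sup>2 + 2 * (cmod (f x) * cmod (g x)) + (cmod (g x))\<^sup>2)"
  proof (rule Bochner_Integration.integral_mono)
    show "integrable (mu p) (\<lambda>x. (cmod (f x))\<^sup>2 + 2 * (cmod (f x) * cmod (g x)) + (cmod (g x))\<^sup>2)"
      using iA iB iC by simp
    fix x
    have "cmod (f x + g x) \<le> cmod (f x) + cmod (g x)" by (rule norm_triangle_ineq)
    then have "(cmod (f x + g x))\<^sup>2 \<le> (cmod (f x) + cmod (g x))\<^sup>2" by (simp add: power_mono)
    then show "(cmod (f x + g x))\<^sup>2 \<le> (cmod (f x))\<^sup>2 + 2 * (cmod (f x) * cmod (g x)) + (cmod (g x))\<^sup>2"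
      by (simp add: power2_sum)
  qed fact
  also have "\<dots> = (LINT x|mu p. (cmod (f x))\<^sup>2 + 2 * (cmod (f x) * cmod (g x))) + (LINT x|mu p. (cmod (g x))\<^sup>2)"
    using iA iB iC by (intro Bochner_Integration.integral_add) auto
  also have "\<dots> = (NN f)^2 + 2 * (LINT x|mu p. cmod (f x) * cmod (g x)) + (NN g)^2"
  proof -
    have "(LINT x|mu p. (cmod (f x))\<^sup>2 + 2 * (cmod (f x) * cmod (g x)))
     = (LINT x|mu p. (cmod (f x))\<^sup>2) + (LINT x|mu p. 2 * (cmod (f x) * cmod (g x)))"
      using iA iB iC by (intro Bochner_Integration.integral_add) auto
    moreover have "(LINT x|mu p. 2 * (cmod (f x) * cmod (g x))) = 2 * (LINT x|mu p. cmod (f x) * cmod (g x))"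
      by (rule integral_mult_right_zero)
    moreover have "(LINT x|mu p. (cmod (f x))\<^sup>2) = (NN f)^2" using NN_sq[OF f] by simp
    moreover have "(LINT x|mu p. (cmod (g x))\<^sup>2) = (NN g)^2" using NN_sq[OF g] by simp
    ultimately show ?thesis by linarith
  qed
  also have "\<dots> \<le> (NN f)^2 + 2 * (NN f * NN g) + (NN g)^2"
    using CS_abs[OF f g] by simp
  also have "\<dots> = (NN f + NN g)^2" by (simp add: power2_sum)
  finally have "(NN (\<lambda>x. f x + g x))^2 \<le> (NN f + NN g)^2"
    using NN_sq[OF L2_add[OF f g]] by simp
  then show ?thesis by (rule power2_le_imp_le[OF _ add_nonneg_nonneg[OF NN_nonneg NN_nonneg]])
qed

lemma NN_cmult: "NN (\<lambda>x. c * f x) = cmod c * NN f"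
  by (simp add: L2norm_def norm_mult power_mult_distrib real_sqrt_mult)

lemma NN_minus: "NN (\<lambda>x. - f x) = NN f"
  using NN_cmult[of "-1" f] by simp

lemma NN_commute: "NN (\<lambda>x. f x - g x) = NN (\<lambda>x. g x - f x)"
  using NN_minus[of "\<lambda>x. f x - g x"] by simp

lemma Mink_diff:
  assumes f: "L2 p f" and g: "L2 p g" and h: "L2 p h"
  shows "NN (\<lambda>x. f x - h x) \<le> NN (\<lambda>x. f x - g x) + NN (\<lambda>x. g x - h x)"
  using Mink[OF L2_diff[OF f g] L2_diff[OF g h]] by simp

lemma NN_zero_AE:
  assumes f: "L2 p f" and z: "NN f = 0"
  shows "AE x in mu p. f x = 0"
proof -
  have "(LINT x|mu p. (cmod (f x))\<^sup>2) = 0" using NN_sq[OF f] z by simp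
  then have "AE x in mu p. (cmod (f x))\<^sup>2 = 0"
    using L2D[OF f] by (subst integral_nonneg_eq_0_iff_AE[symmetric]) auto
  then show ?thesis by simp
qed

lemma NN_AE_cong:
  assumes "AE x in mu p. f x = g x" "f \<in> borel_measurable (mu p)" "g \<in> borel_measurable (mu p)"
  shows "NN f = NN g"
proof -
  have "(LINT x|mu p. (cmod (f x))\<^sup>2) = (LINT x|mu p. (cmod (g x))\<^sup>2)"
    using assms by (intro integral_cong_AE) auto
  then show ?thesis by (simp add: L2norm_def)
qed

lemma inner_AE_cong:
  assumes "AE x in mu p. g x = h x" "g \<in> borel_measurable (mu p)" "h \<in> borel_measurable (mu p)"
    "f \<in> borel_measurable (mu p)"
  shows "inner_mu p f g = inner_mu p f h"
  unfolding inner_mu_def using assms by (intro integral_cong_AE) auto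

lemma inner_add:
  assumes "L2 p f" "L2 p g" "L2 p h"
  shows "inner_mu p f (\<lambda>x. g x + h x) = inner_mu p f g + inner_mu p f h"
  unfolding inner_mu_def using L2_prod[OF assms(1,2)] L2_prod[OF assms(1,3)]
  by (simp add: distrib_left)

lemma inner_cmult:
  shows "inner_mu p f (\<lambda>x. c * g x) = c * inner_mu p f g"
  unfolding inner_mu_def by (simp add: mult.left_commute)

lemma NN_indicator: "NN (indicator A :: real \<Rightarrow> complex) \<le> 1"
proof -
  have "(LINT x|mu p. (cmod (indicator A x :: complex))\<^sup>2) \<le> (LINT x|mu p. 1)"
    by (intro integral_mono') (auto simp: indicator_def)
  then show ?thesis by (simp add: L2norm_def P.prob_space)
qed

end


lemma le_eps:
  fixes x C :: real
  assumes h: "\<And>e. e > 0 \<Longrightarrow> x \<le> e * C" and C: "0 \<le> C"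
  shows "x \<le> 0"
proof (rule ccontr)
  assume "\<not> x \<le> 0"
  then have x: "x > 0" by simp
  define e where "e = x / (2 * (C + 1))"
  have e: "e > 0" using x C by (simp add: e_def)
  have "e * C < x"
  proof -
    have "e * C \<le> e * (C + 1)" using e by simp
    also have "\<dots> = x / 2" using C by (simp add: e_def field_simps)
    finally show ?thesis using x by simp
  qed
  then show False using h[OF e] by simp
qed

definition WW :: "nat \<Rightarrow> nat list set" where "WW m = (\<Union>n\<le>m. words n)"

lemma finite_WW: "finite (WW m)" by (simp add: WW_def finite_words)

lemma Km_WW: "Km p m f = (\<lambda>x. \<Sum>u\<in>WW m. inner_mu p (indicator (Cw u)) f * indicator (Cw u) x)"
  by (simp add: Km_def WW_def)

context cm begin

lemma L2_Cw: "L2 p (indicator (Cw u) :: real \<Rightarrow> complex)"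
  by (rule L2_indicator[OF Cw_borel])

lemma Km_L2: "L2 p (Km p m f)"
  unfolding Km_WW
  by (intro L2_sum finite_WW L2_cmult[of "indicator (Cw _)", simplified mult.commute] L2_Cw)

lemma inner_lin:
  assumes h: "L2 p h" and f: "L2 p f" and g: "L2 p g"
  shows "inner_mu p h (\<lambda>x. a * f x + b * g x) = a * inner_mu p h f + b * inner_mu p h g"
  using inner_add[OF h L2_cmult[OF f] L2_cmult[OF g]] by (simp add: inner_cmult)

lemma Km_lin:
  assumes f: "L2 p f" and g: "L2 p g"
  shows "Km p m (\<lambda>x. a * f x + b * g x) x = a * Km p m f x + b * Km p m g x"
  unfolding Km_WW using inner_lin[OF L2_Cw f g]
  by (simp add: sum_distrib_left sum.distrib algebra_simps)

lemma Km_AE: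
  assumes "AE x in mu p. f x = g x" "f \<in> borel_measurable (mu p)" "g \<in> borel_measurable (mu p)"
  shows "Km p m f = Km p m g"
proof -
  have "inner_mu p (indicator (Cw u)) f = inner_mu p (indicator (Cw u)) g" for u
    using assms L2D(1)[OF L2_Cw] by (intro inner_AE_cong) auto
  then show ?thesis unfolding Km_WW by simp
qed

lemma Mink_sum:
  assumes "finite I" "\<And>i. i \<in> I \<Longrightarrow> L2 p (F i)"
  shows "NN (\<lambda>x. \<Sum>i\<in>I. F i x) \<le> (\<Sum>i\<in>I. NN (F i))"
  using assms
proof (induction I rule: finite_induct)
  case empty then show ?case by (simp add: L2norm_def)
next
  case (insert i I)
  have "NN (\<lambda>x. \<Sum>j\<in>insert i I. F j x) = NN (\<lambda>x. F i x + (\<Sum>j\<in>I. F j x))"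
    using insert by simp
  also have "\<dots> \<le> NN (F i) + NN (\<lambda>x. \<Sum>j\<in>I. F j x)"
    using insert by (intro Mink L2_sum) auto
  also have "\<dots> \<le> NN (F i) + (\<Sum>j\<in>I. NN (F j))"
    using insert by simp
  finally show ?case using insert by simp
qed

lemma Km_bound:
  assumes f: "L2 p f"
  shows "NN (Km p m f) \<le> real (card (WW m)) * NN f"
proof -
  have "NN (Km p m f) \<le> (\<Sum>u\<in>WW m. NN (\<lambda>x. inner_mu p (indicator (Cw u)) f * indicator (Cw u) x))"
    unfolding Km_WW
    by (intro Mink_sum finite_WW L2_cmult[of "indicator (Cw _)", simplified mult.commute] L2_Cw)
  also have "\<dots> \<le> (\<Sum>u\<in>WW m. NN f)"
  proof (intro sum_mono)
    fix u
    have "NN (\<lambda>x. inner_mu p (indicator (Cw u)) f * indicator (Cw u) x)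
        = cmod (inner_mu p (indicator (Cw u)) f) * NN (indicator (Cw u))"
      using NN_cmult[of "inner_mu p (indicator (Cw u)) f" "indicator (Cw u)"] by simp
    also have "\<dots> \<le> (NN (indicator (Cw u)) * NN f) * 1"
      using inner_bound[OF L2_Cw f] NN_indicator[of "Cw u"]
      by (intro mult_mono) (auto simp: NN_nonneg)
    also have "\<dots> \<le> (1 * NN f) * 1"
      using NN_indicator[of "Cw u"] NN_nonneg[of f] by (intro mult_mono) auto
    finally show "NN (\<lambda>x. inner_mu p (indicator (Cw u)) f * indicator (Cw u) x) \<le> NN f" by simp
  qed
  finally show ?thesis by simp
qed

end

locale cmK = cm +
  fixes K :: "(real \<Rightarrow> complex) \<Rightarrow> (real \<Rightarrow> complex)"
  assumes Kinf: "is_Kinf p K"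
begin

lemma K_L2: "L2 p f \<Longrightarrow> L2 p (K f)"
  using Kinf by (simp add: is_Kinf_def)

lemma K_approx:
  assumes "e > 0"
  obtains N where "\<And>f. L2 p f \<Longrightarrow> NN (\<lambda>x. Km p N f x - K f x) \<le> e * NN f"
  using Kinf assms unfolding is_Kinf_def by blast

lemma K_bound_ex: "\<exists>C\<ge>0. \<forall>f. L2 p f \<longrightarrow> NN (K f) \<le> C * NN f"
proof -
  obtain N where N: "\<And>f. L2 p f \<Longrightarrow> NN (\<lambda>x. Km p N f x - K f x) \<le> 1 * NN f"
    using K_approx[of 1] by auto
  have "NN (K f) \<le> (1 + real (card (WW N))) * NN f" if f: "L2 p f" for f
  proof -
    have "NN (K f) = NN (\<lambda>x. (K f x - Km p N f x) + Km p N f x)" by simp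
    also have "\<dots> \<le> NN (\<lambda>x. K f x - Km p N f x) + NN (Km p N f)"
      by (intro Mink L2_diff K_L2 Km_L2 f)
    also have "NN (\<lambda>x. K f x - Km p N f x) = NN (\<lambda>x. Km p N f x - K f x)" by (rule NN_commute)
    also have "\<dots> + NN (Km p N f) \<le> 1 * NN f + real (card (WW N)) * NN f"
      using N[OF f] Km_bound[OF f] by (rule add_mono)
    finally show ?thesis by (simp add: algebra_simps)
  qed
  then show ?thesis by (intro exI[of _ "1 + real (card (WW N))"]) auto
qed

definition kk where "kk = opnorm p K"

lemma kk: "0 \<le> kk" "L2 p f \<Longrightarrow> NN (K f) \<le> kk * NN f"
proof -
  define S where "S = {c. 0 \<le> c \<and> (\<forall>f. L2 p f \<longrightarrow> NN (K f) \<le> c * NN f)}"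
  have kkS: "kk = Inf S" by (simp add: kk_def opnorm_def S_def)
  obtain C where C: "C \<in> S" using K_bound_ex by (auto simp: S_def)
  then have ne: "S \<noteq> {}" by auto
  show "0 \<le> kk" unfolding kkS by (rule cInf_greatest[OF ne]) (auto simp: S_def)
  assume f: "L2 p f"
  show "NN (K f) \<le> kk * NN f"
  proof (cases "NN f = 0")
    case True
    then show ?thesis using C f by (auto simp: S_def)
  next
    case False
    then have pos: "NN f > 0" using NN_nonneg[of f] by simp
    have "NN (K f) / NN f \<le> Inf S"
    proof (rule cInf_greatest[OF ne])
      fix c assume "c \<in> S"
      then have "NN (K f) \<le> c * NN f" using f by (auto simp: S_def)
      then show "NN (K f) / NN f \<le> c" using pos by (simp add: divide_le_eq)
    qed
    then show ?thesis using pos unfolding kkS by (simp add: divide_le_eq mult.commute)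
  qed
qed

lemma K_lin:
  assumes f: "L2 p f" and g: "L2 p g"
  shows "AE x in mu p. K (\<lambda>x. a * f x + b * g x) x = a * K f x + b * K g x"
proof -
  define h where "h = (\<lambda>x. a * f x + b * g x)"
  have h: "L2 p h" unfolding h_def by (intro L2_add L2_cmult f g)
  define D where "D = (\<lambda>x. K h x - (a * K f x + b * K g x))"
  have D: "L2 p D" unfolding D_def by (intro L2_diff L2_add L2_cmult K_L2 f g h)
  have ee: "NN D \<le> e * (NN h + cmod a * NN f + cmod b * NN g)" if e: "e > 0" for e
  proof -
    obtain N where N: "\<And>f. L2 p f \<Longrightarrow> NN (\<lambda>x. Km p N f x - K f x) \<le> e * NN f"
      using K_approx[OF e] by auto
    have eqD: "D = (\<lambda>x. (K h x - Km p N h x) + (a * (Km p N f x - K f x) + b * (Km p N g x - K g x)))"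
      unfolding D_def h_def using Km_lin[OF f g] by (auto simp: algebra_simps)
    have "NN D \<le> NN (\<lambda>x. K h x - Km p N h x) + NN (\<lambda>x. a * (Km p N f x - K f x) + b * (Km p N g x - K g x))"
      unfolding eqD by (intro Mink L2_diff L2_add L2_cmult K_L2 Km_L2 f g h)
    also have "\<dots> \<le> NN (\<lambda>x. K h x - Km p N h x) + (NN (\<lambda>x. a * (Km p N f x - K f x)) + NN (\<lambda>x. b * (Km p N g x - K g x)))"
      by (intro add_left_mono Mink L2_diff L2_add L2_cmult K_L2 Km_L2 f g h)
    also have "\<dots> = NN (\<lambda>x. Km p N h x - K h x) + (cmod a * NN (\<lambda>x. Km p N f x - K f x) + cmod b * NN (\<lambda>x. Km p N g x - K g x))"
      by (simp add: NN_cmult NN_commute[of "K h"])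
    also have "\<dots> \<le> e * NN h + (cmod a * (e * NN f) + cmod b * (e * NN g))"
      using N[OF h] N[OF f] N[OF g]
      by (intro add_mono mult_left_mono) auto
    finally show ?thesis by (simp add: algebra_simps)
  qed
  have "NN D \<le> 0"
    by (rule le_eps[OF ee]) (assumption, intro add_nonneg_nonneg mult_nonneg_nonneg NN_nonneg norm_ge_zero)
  then have "NN D = 0" using NN_nonneg[of D] by simp
  then have "AE x in mu p. D x = 0" by (rule NN_zero_AE[OF D])
  then show ?thesis by eventually_elim (simp add: D_def h_def)
qed

lemma K_AE:
  assumes f: "L2 p f" and g: "L2 p g" and fg: "AE x in mu p. f x = g x"
  shows "AE x in mu p. K f x = K g x"
proof -
  define D where "D = (\<lambda>x. K f x - K g x)"
  have D: "L2 p D" unfolding D_def by (intro L2_diff K_L2 f g)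
  have KmE: "Km p m f = Km p m g" for m using fg L2D(1)[OF f] L2D(1)[OF g] by (rule Km_AE)
  have ee: "NN D \<le> e * (NN f + NN g)" if e: "e > 0" for e
  proof -
    obtain N where N: "\<And>f. L2 p f \<Longrightarrow> NN (\<lambda>x. Km p N f x - K f x) \<le> e * NN f"
      using K_approx[OF e] by auto
    have "NN D \<le> NN (\<lambda>x. K f x - Km p N f x) + NN (\<lambda>x. Km p N f x - K g x)"
      unfolding D_def by (intro Mink_diff K_L2 Km_L2 f g)
    also have "\<dots> = NN (\<lambda>x. Km p N f x - K f x) + NN (\<lambda>x. Km p N g x - K g x)"
      by (simp add: NN_commute[of "K f"] KmE)
    also have "\<dots> \<le> e * NN f + e * NN g" using N[OF f] N[OF g] by (rule add_mono)
    finally show ?thesis by (simp add: algebra_simps)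
  qed
  have "NN D \<le> 0"
    by (rule le_eps[OF ee]) (assumption, intro add_nonneg_nonneg NN_nonneg)
  then have "NN D = 0" using NN_nonneg[of D] by simp
  then have "AE x in mu p. D x = 0" by (rule NN_zero_AE[OF D])
  then show ?thesis by eventually_elim (simp add: D_def)
qed

end


context cm begin

lemma L2_phi: "L2 p phi" unfolding phi_def by (rule L2_indicator[OF Cantor_borel])
lemma NN_phi: "NN phi \<le> 1" unfolding phi_def by (rule NN_indicator)

lemma L2_of_norm: "L2 p h \<Longrightarrow> L2 p (\<lambda>x. complex_of_real (cmod (h x)))"
  unfolding L2_def by (auto simp: norm_of_real)

lemma NN_of_norm: "NN (\<lambda>x. complex_of_real (cmod (h x))) = NN h"
  by (simp add: L2norm_def norm_of_real)

lemma L2_complete: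
  fixes h :: "nat \<Rightarrow> real \<Rightarrow> complex"
  assumes h: "\<And>n. L2 p (h n)" and sm: "summable (\<lambda>n. NN (h n))"
  shows "\<exists>g. L2 p g \<and> (\<lambda>N. NN (\<lambda>x. g x - (\<Sum>n<N. h n x))) \<longlonglongrightarrow> 0"
proof -
  have hm[measurable]: "\<And>n. h n \<in> borel_measurable (mu p)" using L2D(1)[OF h] .
  define A where "A = (\<Sum>n. NN (h n))"
  define Gn where "Gn N x = (\<Sum>n<N. cmod (h n x))" for N x
  have Gn_m[measurable]: "Gn N \<in> borel_measurable (mu p)" for N unfolding Gn_def by measurable
  have Gn_nonneg: "0 \<le> Gn N x" for N x unfolding Gn_def by (intro sum_nonneg) auto
  have Gn_mono: "Gn N x \<le> Gn M x" if "N \<le> M" for N M x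
    unfolding Gn_def using that by (intro sum_mono2) auto
  have L2Gn: "L2 p (\<lambda>x. complex_of_real (Gn N x))" for N
    unfolding Gn_def of_real_sum by (intro L2_sum L2_of_norm h) auto
  have NGn: "NN (\<lambda>x. complex_of_real (Gn N x)) \<le> A" for N
  proof -
    have "NN (\<lambda>x. complex_of_real (Gn N x)) \<le> (\<Sum>n<N. NN (\<lambda>x. complex_of_real (cmod (h n x))))"
      unfolding Gn_def of_real_sum by (intro Mink_sum L2_of_norm h) auto
    also have "\<dots> = (\<Sum>n<N. NN (h n))" by (simp add: NN_of_norm)
    also have "\<dots> \<le> A" unfolding A_def using sm by (intro sum_le_suminf) (auto simp: NN_nonneg)
    finally show ?thesis .
  qed
  have A0: "0 \<le> A" unfolding A_def using sm by (intro suminf_nonneg) (auto simp: NN_nonneg)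
  have iGn: "integrable (mu p) (\<lambda>x. (Gn N x)^2)" for N
    using L2D(2)[OF L2Gn[of N]] by (simp add: norm_of_real)
  have intGn: "(LINT x|mu p. (Gn N x)^2) \<le> A^2" for N
  proof -
    have "(LINT x|mu p. (Gn N x)^2) = (NN (\<lambda>x. complex_of_real (Gn N x)))^2"
      using NN_sq[OF L2Gn[of N]] by (simp add: norm_of_real)
    also have "\<dots> \<le> A^2" using NGn[of N] by (intro power_mono NN_nonneg)
    finally show ?thesis .
  qed
    define F where "F N x = ennreal ((Gn N x)^2)" for N x
  have F_m: "F N \<in> borel_measurable (mu p)" for N unfolding F_def by measurable
  have F_inc: "incseq F"
    unfolding incseq_def le_fun_def F_def
    by (auto intro!: ennreal_leI power_mono Gn_mono Gn_nonneg)
  have "(\<integral>\<^sup>+x. (SUP N. F N x) \<partial>mu p) = (SUP N. integral\<^sup>N (mu p) (F N))"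
    by (rule nn_integral_monotone_convergence_SUP[OF F_inc F_m])
  also have "\<dots> \<le> ennreal (A^2)"
  proof (rule SUP_least)
    fix N
    have "integral\<^sup>N (mu p) (F N) = ennreal (LINT x|mu p. (Gn N x)^2)"
      unfolding F_def by (intro nn_integral_eq_integral iGn) auto
    then show "integral\<^sup>N (mu p) (F N) \<le> ennreal (A^2)" using intGn[of N] by (simp add: ennreal_leI)
  qed
  finally have "(\<integral>\<^sup>+x. (SUP N. F N x) \<partial>mu p) \<noteq> \<infinity>" by (auto simp: top_unique)
  then have "AE x in mu p. (SUP N. F N x) \<noteq> \<infinity>"
    by (intro nn_integral_noteq_infinite) (use F_m in measurable)
  then have AEs: "AE x in mu p. summable (\<lambda>n. cmod (h n x))"
  proof eventually_elim
    case (elim x)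
    then obtain b where b: "(SUP N. F N x) = ennreal b" "0 \<le> b"
      by (cases "(SUP N. F N x)") (auto simp: top_unique)
    have sq: "(Gn N x)^2 \<le> b" for N
    proof -
      have "F N x \<le> (SUP N. F N x)" by (rule SUP_upper) simp
      then have "F N x \<le> ennreal b" using b(1) by simp
      then show ?thesis using b(2) by (simp add: F_def)
    qed
    have "Gn N x \<le> sqrt b" for N using real_le_rsqrt[OF sq[of N]] .
    then show ?case unfolding Gn_def by (intro summableI_nonneg_bounded[where x="sqrt b"]) auto
  qed
  define g where "g x = (\<Sum>n. h n x)" for x
  define Gs where "Gs x = (\<Sum>n. cmod (h n x))" for x
  have g_m[measurable]: "g \<in> borel_measurable (mu p)" unfolding g_def by measurable
  have Gs_m[measurable]: "Gs \<in> borel_measurable (mu p)" unfolding Gs_def by measurable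
    obtain L where L: "(\<lambda>N. LINT x|mu p. (Gn N x)^2) \<longlonglongrightarrow> L"
  proof -
    have "incseq (\<lambda>N. LINT x|mu p. (Gn N x)^2)"
      unfolding incseq_def
      by (auto intro!: Bochner_Integration.integral_mono iGn power_mono Gn_mono Gn_nonneg)
    then obtain L where "(\<lambda>N. LINT x|mu p. (Gn N x)^2) \<longlonglongrightarrow> L"
      using incseq_convergent[of "\<lambda>N. LINT x|mu p. (Gn N x)^2" "A^2"] intGn by blast
    then show ?thesis by (rule that)
  qed
  have iGs: "integrable (mu p) (\<lambda>x. (Gs x)^2)"
  proof (rule integral_monotone_convergence_nonneg(1)[where f="\<lambda>N x. (Gn N x)^2"])
    show "\<And>i. integrable (mu p) (\<lambda>x. (Gn i x)^2)" by (rule iGn)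
    show "AE x in mu p. mono (\<lambda>n. (Gn n x)^2)"
      by (auto intro!: AE_I2 monoI power_mono Gn_mono Gn_nonneg)
    show "\<And>i. AE x in mu p. 0 \<le> (Gn i x)^2" by auto
    show "AE x in mu p. (\<lambda>i. (Gn i x)^2) \<longlonglongrightarrow> (Gs x)^2"
      using AEs
    proof eventually_elim
      case (elim x)
      then have "(\<lambda>N. Gn N x) \<longlonglongrightarrow> Gs x"
        unfolding Gn_def Gs_def by (intro summable_LIMSEQ) 
      then show ?case by (intro tendsto_power)
    qed
    show "(\<lambda>i. LINT x|mu p. (Gn i x)^2) \<longlonglongrightarrow> L" by (rule L)
    show "(\<lambda>x. (Gs x)^2) \<in> borel_measurable (mu p)" by measurable
  qed
  have bound_g: "AE x in mu p. cmod (g x) \<le> Gs x" using AEs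
    by eventually_elim (simp add: g_def Gs_def summable_norm)
  have bound_S: "AE x in mu p. cmod (\<Sum>n<N. h n x) \<le> Gs x" for N using AEs
  proof eventually_elim
    case (elim x)
    have "cmod (\<Sum>n<N. h n x) \<le> (\<Sum>n<N. cmod (h n x))" by (rule norm_sum)
    also have "\<dots> \<le> Gs x" unfolding Gs_def using elim by (intro sum_le_suminf) auto
    finally show ?case .
  qed
  have Lg: "L2 p g"
    unfolding L2_def
  proof
    show "g \<in> borel_measurable (mu p)" by measurable
    show "integrable (mu p) (\<lambda>x. (cmod (g x))\<^sup>2)"
    proof (rule Bochner_Integration.integrable_bound[where f="\<lambda>x. (Gs x)^2"])
      show "integrable (mu p) (\<lambda>x. (Gs x)^2)" by (rule iGs)
      show "(\<lambda>x. (cmod (g x))\<^sup>2) \<in> borel_measurable (mu p)" by measurable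
      show "AE x in mu p. norm ((cmod (g x))\<^sup>2) \<le> norm ((Gs x)^2)" using bound_g
        by eventually_elim (auto intro!: power_mono)
    qed
  qed
  have "(\<lambda>N. LINT x|mu p. (cmod (g x - (\<Sum>n<N. h n x)))^2) \<longlonglongrightarrow> (LINT x|mu p. 0)"
  proof (rule integral_dominated_convergence[where w="\<lambda>x. 4 * (Gs x)^2"])
    show "(\<lambda>x. 0::real) \<in> borel_measurable (mu p)" by simp
    show "\<And>N. (\<lambda>x. (cmod (g x - (\<Sum>n<N. h n x)))^2) \<in> borel_measurable (mu p)" by measurable
    show "integrable (mu p) (\<lambda>x. 4 * (Gs x)^2)" using iGs by simp
    show "AE x in mu p. (\<lambda>N. (cmod (g x - (\<Sum>n<N. h n x)))^2) \<longlonglongrightarrow> 0" using AEs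
    proof eventually_elim
      case (elim x)
      have "(\<lambda>N. (\<Sum>n<N. h n x)) \<longlonglongrightarrow> g x"
        using summable_norm_cancel[OF elim] unfolding g_def by (rule summable_LIMSEQ)
      then have "(\<lambda>N. g x - (\<Sum>n<N. h n x)) \<longlonglongrightarrow> g x - g x" by (intro tendsto_diff tendsto_const)
      then have "(\<lambda>N. cmod (g x - (\<Sum>n<N. h n x))) \<longlonglongrightarrow> cmod (g x - g x)" by (rule tendsto_norm)
      then have "(\<lambda>N. (cmod (g x - (\<Sum>n<N. h n x)))^2) \<longlonglongrightarrow> (cmod (g x - g x))^2" by (rule tendsto_power)
      then show ?case by simp
    qed
    show "AE x in mu p. norm ((cmod (g x - (\<Sum>n<N. h n x)))^2) \<le> 4 * (Gs x)^2" for N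
      using bound_g bound_S[of N]
    proof eventually_elim
      case (elim x)
      have "cmod (g x - (\<Sum>n<N. h n x)) \<le> cmod (g x) + cmod (\<Sum>n<N. h n x)" by (rule norm_triangle_ineq4)
      also have "\<dots> \<le> 2 * Gs x" using elim by simp
      finally have "(cmod (g x - (\<Sum>n<N. h n x)))^2 \<le> (2 * Gs x)^2" by (intro power_mono) auto
      then show ?case by (simp add: power_mult_distrib)
    qed
  qed
  then have "(\<lambda>N. sqrt (LINT x|mu p. (cmod (g x - (\<Sum>n<N. h n x)))^2)) \<longlonglongrightarrow> sqrt 0"
    by (intro tendsto_real_sqrt) simp
  then have "(\<lambda>N. NN (\<lambda>x. g x - (\<Sum>n<N. h n x))) \<longlonglongrightarrow> 0" by (simp add: L2norm_def)
  then show ?thesis using Lg by blast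
qed

end


context cmK begin

lemma K_add:
  assumes f: "L2 p f" and g: "L2 p g"
  shows "AE x in mu p. K (\<lambda>x. f x + g x) x = K f x + K g x"
  using K_lin[OF f g, of 1 1] by simp

lemma K_cmult:
  assumes f: "L2 p f"
  shows "AE x in mu p. K (\<lambda>x. c * f x) x = c * K f x"
  using K_lin[OF f f, of c 0] by simp

lemma K_diff:
  assumes f: "L2 p f" and g: "L2 p g"
  shows "AE x in mu p. K (\<lambda>x. f x - g x) x = K f x - K g x"
  using K_lin[OF f g, of 1 "-1"] by simp

definition sol where "sol w g \<longleftrightarrow> L2 p g \<and> (AE x in mu p. w * g x - K g x = phi x)"

lemma L2_meas: "L2 p f \<Longrightarrow> f \<in> borel_measurable (mu p)" by (rule L2D(1))

lemma sol_NN: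
  assumes w: "kk < cmod w" and s: "sol w g"
  shows "NN g \<le> 1 / (cmod w - kk)"
proof -
  have g: "L2 p g" and ae: "AE x in mu p. w * g x - K g x = phi x" using s by (auto simp: sol_def)
  have "AE x in mu p. w * g x = phi x + K g x" using ae by eventually_elim (simp add: algebra_simps)
  then have "NN (\<lambda>x. w * g x) = NN (\<lambda>x. phi x + K g x)"
    by (rule NN_AE_cong) (intro L2_meas L2_cmult L2_add L2_phi K_L2 g)+
  also have "\<dots> \<le> NN phi + NN (K g)" by (intro Mink L2_phi K_L2 g)
  also have "\<dots> \<le> 1 + kk * NN g" using NN_phi kk(2)[OF g] by (rule add_mono)
  finally have "cmod w * NN g \<le> 1 + kk * NN g" by (simp add: NN_cmult)
  then have "(cmod w - kk) * NN g \<le> 1" by (simp add: algebra_simps)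
  then show ?thesis using w by (simp add: pos_le_divide_eq mult.commute)
qed

lemma sol_unique:
  assumes w: "kk < cmod w" and s1: "sol w g1" and s2: "sol w g2"
  shows "AE x in mu p. g1 x = g2 x"
proof -
  have g1: "L2 p g1" and ae1: "AE x in mu p. w * g1 x - K g1 x = phi x" using s1 by (auto simp: sol_def)
  have g2: "L2 p g2" and ae2: "AE x in mu p. w * g2 x - K g2 x = phi x" using s2 by (auto simp: sol_def)
  define d where "d = (\<lambda>x. g1 x - g2 x)"
  have d: "L2 p d" unfolding d_def by (intro L2_diff g1 g2)
  have "AE x in mu p. w * d x = K d x"
    using ae1 ae2 K_diff[OF g1 g2] by eventually_elim (auto simp: d_def algebra_simps)
  then have "NN (\<lambda>x. w * d x) = NN (K d)"
    by (rule NN_AE_cong) (intro L2_meas L2_cmult K_L2 d)+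
  also have "\<dots> \<le> kk * NN d" by (rule kk(2)[OF d])
  finally have "cmod w * NN d \<le> kk * NN d" by (simp add: NN_cmult)
  then have "(cmod w - kk) * NN d \<le> 0" by (simp add: algebra_simps)
  then have "NN d \<le> 0" using w by (simp add: mult_le_0_iff)
  then have "NN d = 0" using NN_nonneg[of d] by simp
  then have "AE x in mu p. d x = 0" by (rule NN_zero_AE[OF d])
  then show ?thesis by eventually_elim (simp add: d_def)
qed

lemma mfun_eq:
  assumes w: "kk < cmod w" and s: "sol w g"
  shows "mfun p K w = inner_mu p phi g"
  unfolding mfun_def
proof (rule the_equality)
  show "\<exists>g'. L2 p g' \<and> (AE x in mu p. w * g' x - K g' x = phi x) \<and> inner_mu p phi g = inner_mu p phi g'"
    using s by (auto simp: sol_def)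
  fix c assume "\<exists>g'. L2 p g' \<and> (AE x in mu p. w * g' x - K g' x = phi x) \<and> c = inner_mu p phi g'"
  then obtain g' where s': "sol w g'" and c: "c = inner_mu p phi g'" by (auto simp: sol_def)
  have "AE x in mu p. g' x = g x" by (rule sol_unique[OF w s' s])
  then have "inner_mu p phi g' = inner_mu p phi g"
    using s s' by (intro inner_AE_cong L2_meas L2_phi) (auto simp: sol_def)
  then show "c = inner_mu p phi g" using c by simp
qed

lemma mfun_bound:
  assumes w: "kk < cmod w" and s: "sol w g"
  shows "cmod (mfun p K w) \<le> 1 / (cmod w - kk)"
proof -
  have g: "L2 p g" using s by (simp add: sol_def)
  have "cmod (mfun p K w) \<le> NN phi * NN g" unfolding mfun_eq[OF w s] by (rule inner_bound[OF L2_phi g])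
  also have "\<dots> \<le> 1 * NN g" using NN_phi NN_nonneg[of g] by (intro mult_right_mono) auto
  also have "\<dots> \<le> 1 / (cmod w - kk)" using sol_NN[OF w s] by simp
  finally show ?thesis .
qed

lemma sol_exists:
  assumes w: "kk < cmod w"
  shows "\<exists>g. sol w g"
proof -
  have w0: "w \<noteq> 0" using w kk(1) by auto
  have wpos: "cmod w > 0" using w0 by simp
  define fn where "fn n = (K ^^ n) phi" for n
  have fn_Suc: "fn (Suc n) = K (fn n)" for n by (simp add: fn_def)
  have Lfn: "L2 p (fn n)" for n
    by (induction n) (simp_all add: fn_def L2_phi K_L2)
  have Nfn: "NN (fn n) \<le> kk ^ n" for n
  proof (induction n)
    case 0 then show ?case using NN_phi by (simp add: fn_def)
  next
    case (Suc n)
    have "NN (fn (Suc n)) \<le> kk * NN (fn n)" unfolding fn_Suc by (rule kk(2)[OF Lfn])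
    also have "\<dots> \<le> kk * kk ^ n" using Suc kk(1) by (rule mult_left_mono)
    finally show ?case by simp
  qed
  define c where "c n = 1 / w ^ Suc n" for n
  define h where "h n = (\<lambda>x. c n * fn n x)" for n
  have Lh: "L2 p (h n)" for n unfolding h_def by (intro L2_cmult Lfn)
  have Nh: "NN (h n) \<le> (1 / cmod w) * (kk / cmod w) ^ n" for n
  proof -
    have "NN (h n) = cmod (c n) * NN (fn n)" unfolding h_def by (rule NN_cmult)
    also have "\<dots> \<le> cmod (c n) * kk ^ n" using Nfn by (intro mult_left_mono) auto
    also have "\<dots> = (1 / cmod w) * (kk / cmod w) ^ n"
      by (simp add: c_def norm_divide norm_power norm_mult power_divide field_simps)
    finally show ?thesis .
  qed
  have "summable (\<lambda>n. (1 / cmod w) * (kk / cmod w) ^ n)"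
    using w kk(1) by (intro summable_mult summable_geometric) (simp add: divide_less_eq)
  then have smh: "summable (\<lambda>n. NN (h n))"
    by (rule summable_comparison_test[rotated]) (use Nh NN_nonneg in auto)
  obtain g where Lg: "L2 p g" and lim: "(\<lambda>N. NN (\<lambda>x. g x - (\<Sum>n<N. h n x))) \<longlonglongrightarrow> 0"
    using L2_complete[OF Lh smh] by blast
  define S where "S N = (\<lambda>x. \<Sum>n<N. h n x)" for N
  have LS: "L2 p (S N)" for N unfolding S_def by (intro L2_sum Lh) auto
  have KS: "AE x in mu p. K (S N) x = (\<Sum>n<N. c n * fn (Suc n) x)" for N
  proof (induction N)
    case 0
    have "AE x in mu p. K (\<lambda>x. 0 * phi x) x = 0 * K phi x" by (rule K_cmult[OF L2_phi])
    then show ?case by (simp add: S_def)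
  next
    case (Suc N)
    have eq: "S (Suc N) = (\<lambda>x. S N x + h N x)" by (simp add: S_def)
    show ?case unfolding eq using Suc K_add[OF LS Lh, of N N] K_cmult[OF Lfn[of N], where c="c N"]
      by eventually_elim (simp add: h_def fn_Suc)
  qed
  have alg: "(\<Sum>n<N. c n * fn (Suc n) x) = w * S (Suc N) x - phi x" for N x
  proof -
    have "S (Suc N) x = c 0 * fn 0 x + (\<Sum>n<N. c (Suc n) * fn (Suc n) x)"
      unfolding S_def h_def by (rule sum.lessThan_Suc_shift)
    then have "w * S (Suc N) x = w * c 0 * fn 0 x + (\<Sum>n<N. (w * c (Suc n)) * fn (Suc n) x)"
      by (simp add: distrib_left sum_distrib_left mult.assoc)
    also have "w * c 0 = 1" using w0 by (simp add: c_def)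
    also have "(\<lambda>n. w * c (Suc n)) = c" using w0 by (auto simp: c_def)
    finally show ?thesis by (simp add: fn_def)
  qed
  define R where "R = (\<lambda>x. w * g x - K g x - phi x)"
  have LR: "L2 p R" unfolding R_def by (intro L2_diff L2_cmult Lg K_L2 L2_phi)
  have RN: "NN R \<le> cmod w * NN (\<lambda>x. g x - S (Suc N) x) + kk * NN (\<lambda>x. g x - S N x)" for N
  proof -
    have Ld: "L2 p (\<lambda>x. S N x - g x)" by (intro L2_diff LS Lg)
    have "AE x in mu p. R x = w * (g x - S (Suc N) x) + K (\<lambda>x. S N x - g x) x"
      using KS[of N] K_diff[OF LS Lg, of N]
      by eventually_elim (simp add: R_def alg algebra_simps)
    then have "NN R = NN (\<lambda>x. w * (g x - S (Suc N) x) + K (\<lambda>x. S N x - g x) x)"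
      by (rule NN_AE_cong) (intro L2_meas LR L2_add L2_cmult L2_diff Lg LS K_L2 Ld)+
    also have "\<dots> \<le> NN (\<lambda>x. w * (g x - S (Suc N) x)) + NN (K (\<lambda>x. S N x - g x))"
      by (intro Mink L2_cmult L2_diff Lg LS K_L2 Ld)
    also have "\<dots> \<le> cmod w * NN (\<lambda>x. g x - S (Suc N) x) + kk * NN (\<lambda>x. S N x - g x)"
      unfolding NN_cmult by (intro add_left_mono kk(2) Ld)
    also have "NN (\<lambda>x. S N x - g x) = NN (\<lambda>x. g x - S N x)" by (rule NN_commute)
    finally show ?thesis .
  qed
  have lim2: "(\<lambda>N. NN (\<lambda>x. g x - S N x)) \<longlonglongrightarrow> 0" using lim by (simp add: S_def)
  have "(\<lambda>N. cmod w * NN (\<lambda>x. g x - S (Suc N) x) + kk * NN (\<lambda>x. g x - S N x)) \<longlonglongrightarrow> cmod w * 0 + kk * 0"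
    by (intro tendsto_add tendsto_mult tendsto_const lim2 LIMSEQ_Suc[OF lim2])
  then have "NN R \<le> cmod w * 0 + kk * 0"
    by (rule LIMSEQ_le_const) (use RN in blast)
  then have "NN R \<le> 0" by simp
  then have "NN R = 0" using NN_nonneg[of R] by simp
  then have "AE x in mu p. R x = 0" by (rule NN_zero_AE[OF LR])
  then have "sol w g" unfolding sol_def using Lg by (auto elim!: AE_mp simp: R_def)
  then show ?thesis by blast
qed

end


definition T0 :: "real \<Rightarrow> real" where "T0 x = min 1 (3 * x)"
definition T2 :: "real \<Rightarrow> real" where "T2 x = max 0 (3 * x - 2)"

definition TT :: "nat \<Rightarrow> real \<Rightarrow> real" where "TT i = (if i = 0 then T0 else T2)"

definition lift :: "nat \<Rightarrow> (real \<Rightarrow> complex) \<Rightarrow> real \<Rightarrow> complex" where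
  "lift i g x = indicator (Cw [i]) x * g (TT i x)"

lemma TT_Sl: "i \<in> {0,2} \<Longrightarrow> y \<in> {0..1} \<Longrightarrow> TT i (Sl i y) = y"
  by (auto simp: TT_def Sl_def T0_def T2_def S0_def S2_def add_divide_distrib)

lemma Cw0_sub: "Cw [0] \<subseteq> {0..1/3}"
  using Cantor_sub by (auto simp: Cw_Cons Cw_Nil Sl_def S0_def)
lemma Cw2_sub: "Cw [2] \<subseteq> {2/3..1}"
  using Cantor_sub by (auto simp: Cw_Cons Cw_Nil Sl_def S2_def)

lemma Sl_other: "i \<in> {0,2} \<Longrightarrow> j \<in> {0,2} \<Longrightarrow> j \<noteq> i \<Longrightarrow> y \<in> {0..1} \<Longrightarrow> Sl j y \<notin> Cw (i # v)"
proof -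
  assume i: "i \<in> {0,2}" and j: "j \<in> {0,2}" and ji: "j \<noteq> i" and y: "y \<in> {0..1}"
  have sub: "Cw (i # v) \<subseteq> Cw [i]"
    using Cw_Cantor[of v] by (auto simp: Cw_Cons Cw_Nil)
  show ?thesis
  proof
    assume "Sl j y \<in> Cw (i # v)"
    then have "Sl j y \<in> Cw [i]" using sub by auto
    then show False using i j ji y Cw0_sub Cw2_sub by (auto simp: Sl_def S0_def S2_def)
  qed
qed

lemma Sl_inj_mem: "y \<in> Cantor \<Longrightarrow> (Sl i y \<in> Cw (i # v)) = (y \<in> Cw v)"
  by (auto simp: Cw_Cons Sl_def S0_def S2_def)

lemma Sl_Cantor: "i \<in> {0,2} \<Longrightarrow> y \<in> Cantor \<Longrightarrow> Sl i y \<in> Cantor"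
  using S0_Cantor S2_Cantor by (auto simp: Sl_def)

lemma ind_Cons: "i \<in> {0,2} \<Longrightarrow> indicator (Cw (i # v)) x = (indicator (Cw [i]) x * indicator (Cw v) (TT i x) :: complex)"
proof -
  assume i: "i \<in> {0,2}"
  have "x \<in> Cw (i # v) \<longleftrightarrow> x \<in> Cw [i] \<and> TT i x \<in> Cw v"
  proof
    assume "x \<in> Cw (i # v)"
    then obtain y where y: "y \<in> Cw v" "x = Sl i y" by (auto simp: Cw_Cons)
    then have "y \<in> Cantor" using Cw_Cantor by auto
    then show "x \<in> Cw [i] \<and> TT i x \<in> Cw v"
      using y i TT_Sl[OF i] Cantor_sub by (auto simp: Cw_Cons Cw_Nil)
  next
    assume "x \<in> Cw [i] \<and> TT i x \<in> Cw v"
    then obtain y where y: "y \<in> Cantor" "x = Sl i y" "TT i x \<in> Cw v" by (auto simp: Cw_Cons Cw_Nil)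
    then have "TT i x = y" using TT_Sl[OF i] Cantor_sub by auto
    then show "x \<in> Cw (i # v)" using y by (auto simp: Cw_Cons)
  qed
  then show ?thesis by (auto simp: indicator_def)
qed

lemma Cantor_ind: "indicator (Cw [0]) x + indicator (Cw [2]) x = (indicator Cantor x :: complex)"
proof -
  have d: "Cw [0] \<inter> Cw [2] = {}"
  proof -
    have False if a: "x \<in> Cw [0]" "x \<in> Cw [2]" for x
    proof -
      have "x \<le> 1/3" using a(1) Cw0_sub by auto
      moreover have "2/3 \<le> x" using a(2) Cw2_sub by auto
      ultimately show False by simp
    qed
    then show ?thesis by blast
  qed
  have u: "Cantor = Cw [0] \<union> Cw [2]" using Cantor_split by (simp add: Cw_Cons Cw_Nil Sl_def)
  show ?thesis using d by (subst u) (auto simp: indicator_def)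
qed

context cm begin

definition pw :: "nat \<Rightarrow> real" where "pw i = (if i = 0 then p else 1 - p)"

lemma pw_pos: "0 < pw i" "pw i \<le> 1" using p0 p1 by (auto simp: pw_def)

lemma T0_meas: "T0 \<in> measurable (mu p) (mu p)"
proof -
  have "T0 \<in> borel_measurable borel" unfolding T0_def by measurable
  then have "T0 \<in> measurable RI RI" by (rule measurable_restrict_space3) (auto simp: T0_def)
  then show ?thesis by (rule RI_M)
qed

lemma T2_meas: "T2 \<in> measurable (mu p) (mu p)"
proof -
  have "T2 \<in> borel_measurable borel" unfolding T2_def by measurable
  then have "T2 \<in> measurable RI RI" by (rule measurable_restrict_space3) (auto simp: T2_def)
  then show ?thesis by (rule RI_M)
qed

lemma TT_meas: "TT i \<in> measurable (mu p) (mu p)"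
  using T0_meas T2_meas by (simp add: TT_def)

lemma Sl_meas: "i \<in> {0,2} \<Longrightarrow> Sl i \<in> measurable (mu p) (mu p)"
  using S0_M S2_M by (auto simp: Sl_def)

lemma lift_meas: assumes "g \<in> borel_measurable (mu p)" shows "lift i g \<in> borel_measurable (mu p)"
proof -
  have a: "(\<lambda>x. g (TT i x)) \<in> borel_measurable (mu p)" using measurable_compose[OF TT_meas assms] .
  have b: "(indicator (Cw [i]) :: real \<Rightarrow> complex) \<in> borel_measurable (mu p)"
    by (intro meas_M borel_measurable_indicator Cw_borel)
  show ?thesis unfolding lift_def using borel_measurable_times[OF b a] .
qed

lemma cv_nn_lift:
  fixes F :: "real \<Rightarrow> ennreal"
  assumes i: "i \<in> {0,2}" and F: "F \<in> borel_measurable (mu p)"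
    and van: "\<And>x. x \<notin> Cw [i] \<Longrightarrow> F x = 0"
  shows "(\<integral>\<^sup>+x. F x \<partial>mu p) = ennreal (pw i) * (\<integral>\<^sup>+y. F (Sl i y) \<partial>mu p)"
proof -
  have z: "(\<integral>\<^sup>+y. F (Sl j y) \<partial>mu p) = 0" if j: "j \<in> {0,2}" "j \<noteq> i" for j
  proof -
    have "(\<integral>\<^sup>+y. F (Sl j y) \<partial>mu p) = (\<integral>\<^sup>+y. 0 \<partial>mu p)"
    proof (intro nn_integral_cong)
      fix y assume "y \<in> space (mu p)"
      then have "Sl j y \<notin> Cw [i]" using Sl_other[OF i j(1) j(2), of y "[]"] by (simp add: space_M)
      then show "F (Sl j y) = 0" by (rule van)
    qed
    then show ?thesis by simp
  qed
  show ?thesis using cv_nn[OF F] i z[of 0] z[of 2] by (auto simp: pw_def Sl_def)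
qed

lemma cv_int_lift:
  fixes F :: "real \<Rightarrow> complex"
  assumes i: "i \<in> {0,2}" and F: "integrable (mu p) F"
    and van: "\<And>x. x \<notin> Cw [i] \<Longrightarrow> F x = 0"
  shows "integral\<^sup>L (mu p) F = pw i * integral\<^sup>L (mu p) (\<lambda>y. F (Sl i y))"
proof -
  have z: "integral\<^sup>L (mu p) (\<lambda>y. F (Sl j y)) = 0" if j: "j \<in> {0,2}" "j \<noteq> i" for j
  proof -
    have "integral\<^sup>L (mu p) (\<lambda>y. F (Sl j y)) = integral\<^sup>L (mu p) (\<lambda>y. 0)"
    proof (intro Bochner_Integration.integral_cong refl)
      fix y assume "y \<in> space (mu p)"
      then have "Sl j y \<notin> Cw [i]" using Sl_other[OF i j(1) j(2), of y "[]"] by (simp add: space_M)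
      then show "F (Sl j y) = 0" by (rule van)
    qed
    then show ?thesis by simp
  qed
  show ?thesis using cv_int[OF F] i z[of 0] z[of 2] by (auto simp: pw_def Sl_def)
qed

lemma AE_lift:
  assumes i: "i \<in> {0,2}" and P: "AE y in mu p. P y"
  shows "AE x in mu p. x \<in> Cw [i] \<longrightarrow> P (TT i x)"
proof -
  obtain N where N: "{y \<in> space (mu p). \<not> P y} \<subseteq> N" "N \<in> sets (mu p)" "emeasure (mu p) N = 0"
    using P by (auto elim!: AE_E)
  define N' where "N' = {x \<in> space (mu p). x \<in> Cw [i] \<and> TT i x \<in> N}"
  have N'm: "N' \<in> sets (mu p)"
  proof -
    have "N' = (TT i -` N \<inter> space (mu p)) \<inter> (Cw [i] \<inter> space (mu p))" by (auto simp: N'_def)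
    moreover have "TT i -` N \<inter> space (mu p) \<in> sets (mu p)" using measurable_sets[OF TT_meas N(2)] .
    moreover have "Cw [i] \<inter> space (mu p) \<in> sets (mu p)"
      using sets_M Cw_sub[of "[i]"] by (auto simp: sets_RI_iff space_M)
    ultimately show ?thesis by auto
  qed
  have "emeasure (mu p) N' = (\<integral>\<^sup>+x. indicator N' x \<partial>mu p)" using N'm by simp
  also have "\<dots> = ennreal (pw i) * (\<integral>\<^sup>+y. indicator N' (Sl i y) \<partial>mu p)"
    using N'm by (intro cv_nn_lift i) (auto simp: N'_def indicator_def)
  also have "(\<integral>\<^sup>+y. indicator N' (Sl i y) \<partial>mu p) = 0"
  proof -
  have "(\<integral>\<^sup>+y. indicator N' (Sl i y) \<partial>mu p) \<le> (\<integral>\<^sup>+y. indicator N y \<partial>mu p)"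
  proof (intro nn_integral_mono)
    fix y assume y: "y \<in> space (mu p)"
    have "Sl i y \<in> N' \<Longrightarrow> y \<in> N" using TT_Sl[OF i] y by (auto simp: N'_def space_M)
    then show "indicator N' (Sl i y) \<le> (indicator N y :: ennreal)" by (auto simp: indicator_def)
  qed
  also have "(\<integral>\<^sup>+y. indicator N y \<partial>mu p) = 0" using N by simp
  finally show ?thesis by (simp add: le_zero_eq)
  qed
  finally have "emeasure (mu p) N' = 0" by simp
  then have "N' \<in> null_sets (mu p)" using N'm by auto
  moreover have "{x \<in> space (mu p). \<not> (x \<in> Cw [i] \<longrightarrow> P (TT i x))} \<subseteq> N'"
    using N(1) TT_meas by (auto simp: N'_def measurable_def)
  ultimately show ?thesis by (rule AE_I')
qed

end


lemma Sl_inj: "i \<in> {0,2} \<Longrightarrow> Sl i x = Sl i y \<Longrightarrow> x = y"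
  by (auto simp: Sl_def S0_def S2_def)

lemma ind_Cwi_Sl: "i \<in> {0,2} \<Longrightarrow> indicator (Cw [i]) (Sl i y) = (indicator Cantor y :: 'a::zero_neq_one)"
proof -
  assume i: "i \<in> {0,2}"
  have "Sl i y \<in> Cw [i] \<longleftrightarrow> y \<in> Cantor"
    using Sl_inj[OF i] by (auto simp: Cw_Cons Cw_Nil)
  then show ?thesis by (simp add: indicator_def)
qed

lemma lift_Sl: "i \<in> {0,2} \<Longrightarrow> y \<in> {0..1} \<Longrightarrow> lift i h (Sl i y) = indicator Cantor y * h y"
  by (simp add: lift_def ind_Cwi_Sl TT_Sl)

lemma WW_Suc: "WW (Suc m) = insert [] ((\<lambda>v. 0#v) ` WW m \<union> (\<lambda>v. 2#v) ` WW m)"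
proof -
  have "WW (Suc m) = words 0 \<union> (\<Union>n\<le>m. words (Suc n))"
    unfolding WW_def atMost_Suc_eq_insert_0 by (simp add: image_comp)
  also have "\<dots> = insert [] ((\<lambda>v. 0#v) ` WW m \<union> (\<lambda>v. 2#v) ` WW m)"
    unfolding words_Suc words_0 WW_def by auto
  finally show ?thesis .
qed

lemma sum_WW_Suc:
  "(\<Sum>u\<in>WW (Suc m). F u) = F [] + (\<Sum>v\<in>WW m. F (0#v)) + (\<Sum>v\<in>WW m. F (2#v))"
proof -
  have fin: "finite (WW m)" by (rule finite_WW)
  have d: "(\<lambda>v. 0#v) ` WW m \<inter> (\<lambda>v. 2#v) ` WW m = {}" by auto
  have "(\<Sum>u\<in>WW (Suc m). F u) = F [] + (\<Sum>u\<in>(\<lambda>v. 0#v) ` WW m \<union> (\<lambda>v. 2#v) ` WW m. F u)"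
    unfolding WW_Suc using fin by (subst sum.insert) auto
  also have "(\<Sum>u\<in>(\<lambda>v. 0#v) ` WW m \<union> (\<lambda>v. 2#v) ` WW m. F u)
      = (\<Sum>u\<in>(\<lambda>v. 0#v) ` WW m. F u) + (\<Sum>u\<in>(\<lambda>v. 2#v) ` WW m. F u)"
    using fin d by (intro sum.union_disjoint) auto
  also have "(\<Sum>u\<in>(\<lambda>v. 0#v) ` WW m. F u) = (\<Sum>v\<in>WW m. F (0#v))"
    by (subst sum.reindex) (auto simp: inj_on_def)
  also have "(\<Sum>u\<in>(\<lambda>v. 2#v) ` WW m. F u) = (\<Sum>v\<in>WW m. F (2#v))"
    by (subst sum.reindex) (auto simp: inj_on_def)
  finally show ?thesis by (simp add: add.assoc)
qed

context cm begin

lemma cv_real_lift: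
  fixes F :: "real \<Rightarrow> real"
  assumes i: "i \<in> {0,2}" and F: "integrable (mu p) F"
    and van: "\<And>x. x \<notin> Cw [i] \<Longrightarrow> F x = 0"
  shows "integral\<^sup>L (mu p) F = pw i * integral\<^sup>L (mu p) (\<lambda>y. F (Sl i y))"
proof -
  have z: "integral\<^sup>L (mu p) (\<lambda>y. F (Sl j y)) = 0" if j: "j \<in> {0,2}" "j \<noteq> i" for j
  proof -
    have "integral\<^sup>L (mu p) (\<lambda>y. F (Sl j y)) = integral\<^sup>L (mu p) (\<lambda>y. 0)"
    proof (intro Bochner_Integration.integral_cong refl)
      fix y assume "y \<in> space (mu p)"
      then have "Sl j y \<notin> Cw [i]" using Sl_other[OF i j(1) j(2), of y "[]"] by (simp add: space_M)
      then show "F (Sl j y) = 0" by (rule van)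
    qed
    then show ?thesis by simp
  qed
  show ?thesis using cv_real[OF F] i z[of 0] z[of 2] by (auto simp: pw_def Sl_def)
qed

lemma L2_lift:
  assumes i: "i \<in> {0,2}" and h: "L2 p h"
  shows "L2 p (lift i h)" "NN (lift i h) \<le> NN h"
proof -
  have hm[measurable]: "h \<in> borel_measurable (mu p)" using L2D(1)[OF h] .
  have lm[measurable]: "lift i h \<in> borel_measurable (mu p)" by (rule lift_meas[OF hm])
  have van: "x \<notin> Cw [i] \<Longrightarrow> lift i h x = 0" for x by (simp add: lift_def)
  have "(\<integral>\<^sup>+x. ennreal ((cmod (lift i h x))\<^sup>2) \<partial>mu p)
      = ennreal (pw i) * (\<integral>\<^sup>+y. ennreal ((cmod (lift i h (Sl i y)))\<^sup>2) \<partial>mu p)"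
    by (rule cv_nn_lift[OF i]) (auto simp: van)
  also have "\<dots> \<le> 1 * (\<integral>\<^sup>+y. ennreal ((cmod (h y))\<^sup>2) \<partial>mu p)"
  proof (intro mult_mono nn_integral_mono)
    fix y assume "y \<in> space (mu p)"
    then show "ennreal ((cmod (lift i h (Sl i y)))\<^sup>2) \<le> ennreal ((cmod (h y))\<^sup>2)"
      using lift_Sl[OF i] by (auto simp: space_M indicator_def intro!: ennreal_leI)
  qed (use pw_pos in auto)
  also have "\<dots> < \<infinity>"
    using L2D(2)[OF h] by (simp add: integrable_iff_bounded)
  finally have fin: "(\<integral>\<^sup>+x. ennreal (norm ((cmod (lift i h x))\<^sup>2)) \<partial>mu p) < \<infinity>" by simp
  have int: "integrable (mu p) (\<lambda>x. (cmod (lift i h x))\<^sup>2)"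
    using fin by (simp add: integrable_iff_bounded)
  show L: "L2 p (lift i h)" unfolding L2_def using int by simp
  have "(LINT x|mu p. (cmod (lift i h x))\<^sup>2) = pw i * (LINT y|mu p. (cmod (lift i h (Sl i y)))\<^sup>2)"
    by (rule cv_real_lift[OF i int]) (simp add: van)
  also have "(LINT y|mu p. (cmod (lift i h (Sl i y)))\<^sup>2) \<le> (LINT y|mu p. (cmod (h y))\<^sup>2)"
  proof (rule integral_mono_AE)
    show "integrable (mu p) (\<lambda>y. (cmod (lift i h (Sl i y)))\<^sup>2)"
      using cv_integrable[OF int, of "Sl i"] i by (auto simp: Sl_def)
    show "integrable (mu p) (\<lambda>y. (cmod (h y))\<^sup>2)" using L2D(2)[OF h] .
    show "AE y in mu p. (cmod (lift i h (Sl i y)))\<^sup>2 \<le> (cmod (h y))\<^sup>2"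
      using lift_Sl[OF i] by (intro AE_I2) (auto simp: space_M indicator_def)
  qed
  then have "pw i * (LINT y|mu p. (cmod (lift i h (Sl i y)))\<^sup>2) \<le> 1 * (LINT y|mu p. (cmod (h y))\<^sup>2)"
    using pw_pos by (intro mult_mono) auto
  finally have "(LINT x|mu p. (cmod (lift i h x))\<^sup>2) \<le> (LINT y|mu p. (cmod (h y))\<^sup>2)" by simp
  then show "NN (lift i h) \<le> NN h" unfolding L2norm_def by (rule real_sqrt_le_mono)
qed

lemma inner_lift_gen:
  assumes i: "i \<in> {0,2}" and A: "A \<in> sets borel" and B: "B \<in> sets borel" and BC: "B \<subseteq> Cantor"
    and AB: "\<And>y. y \<in> Cantor \<Longrightarrow> Sl i y \<in> A \<longleftrightarrow> y \<in> B" and g: "L2 p g"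
  shows "inner_mu p (indicator A) (lift i g) = pw i * inner_mu p (indicator B) g"
proof -
  define F where "F x = cnj (indicator A x) * lift i g x" for x
  have iF: "integrable (mu p) F" unfolding F_def by (intro L2_prod L2_indicator A L2_lift i g)
  have "inner_mu p (indicator A) (lift i g) = integral\<^sup>L (mu p) F" unfolding F_def inner_mu_def ..
  also have "\<dots> = pw i * integral\<^sup>L (mu p) (\<lambda>y. F (Sl i y))"
    by (rule cv_int_lift[OF i iF]) (simp add: F_def lift_def)
  also have "integral\<^sup>L (mu p) (\<lambda>y. F (Sl i y)) = inner_mu p (indicator B) g"
    unfolding inner_mu_def
  proof (intro Bochner_Integration.integral_cong refl)
    fix y assume y: "y \<in> space (mu p)"
    show "F (Sl i y) = cnj (indicator B y) * g y"
    proof (cases "y \<in> Cantor")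
      case True then show ?thesis using y AB lift_Sl[OF i] by (auto simp: F_def space_M indicator_def)
    next
      case False then show ?thesis using y BC lift_Sl[OF i] by (auto simp: F_def space_M indicator_def)
    qed
  qed
  finally show ?thesis .
qed

lemma inner_lift_other:
  assumes i: "i \<in> {0,2}" and j: "j \<in> {0,2}" "j \<noteq> i"
  shows "inner_mu p (indicator (Cw (j # v))) (lift i g) = 0"
proof -
  have "cnj (indicator (Cw (j # v)) x) * lift i g x = 0" for x
  proof (cases "x \<in> Cw (j # v)")
    case True
    then obtain y where "y \<in> Cw v" "x = Sl j y" by (auto simp: Cw_Cons)
    moreover then have "y \<in> {0..1}" using Cw_sub[of v] by auto
    ultimately have "x \<notin> Cw (i # [])" using Sl_other[OF i j] by auto
    then show ?thesis by (simp add: lift_def)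
  qed simp
  then have "(\<lambda>x. cnj (indicator (Cw (j # v)) x) * lift i g x) = (\<lambda>x. 0)" by (rule ext)
  then show ?thesis unfolding inner_mu_def by simp
qed

lemma inner_phi_lift:
  assumes i: "i \<in> {0,2}" and g: "L2 p g"
  shows "inner_mu p phi (lift i g) = pw i * inner_mu p phi g"
  unfolding phi_def using Sl_Cantor[OF i]
  by (intro inner_lift_gen i Cantor_borel g) auto

lemma Km_lift:
  assumes i: "i \<in> {0,2}" and g: "L2 p g"
  shows "Km p (Suc m) (lift i g) x = inner_mu p phi (lift i g) * phi x + pw i * lift i (Km p m g) x"
proof -
  define T where "T u = inner_mu p (indicator (Cw u)) (lift i g) * indicator (Cw u) x" for u
  have T0: "T [] = inner_mu p phi (lift i g) * phi x" by (simp add: T_def Cw_Nil phi_def)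
  have Ti: "T (i # v) = pw i * (indicator (Cw [i]) x * (inner_mu p (indicator (Cw v)) g * indicator (Cw v) (TT i x)))" for v
  proof -
    have "inner_mu p (indicator (Cw (i # v))) (lift i g) = pw i * inner_mu p (indicator (Cw v)) g"
      using Sl_inj_mem[of _ i v] by (intro inner_lift_gen i Cw_borel g Cw_Cantor) auto
    then show ?thesis unfolding T_def ind_Cons[OF i, of v x] by simp
  qed
  have Tj: "T (j # v) = 0" if "j \<in> {0,2}" "j \<noteq> i" for j v
    using inner_lift_other[OF i that] by (simp add: T_def)
  have Si: "(\<Sum>v\<in>WW m. T (i # v)) = pw i * lift i (Km p m g) x"
    unfolding Ti lift_def Km_WW by (simp add: sum_distrib_left)
  have "Km p (Suc m) (lift i g) x = (\<Sum>u\<in>WW (Suc m). T u)" by (simp add: Km_WW T_def)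
  also have "\<dots> = T [] + (\<Sum>v\<in>WW m. T (0#v)) + (\<Sum>v\<in>WW m. T (2#v))" by (rule sum_WW_Suc)
  also have "\<dots> = inner_mu p phi (lift i g) * phi x + pw i * lift i (Km p m g) x"
  proof -
    consider "i = 0" | "i = 2" using i by auto
    then show ?thesis
    proof cases
      case 1
      have z: "(\<Sum>v\<in>WW m. T (2#v)) = 0" using Tj[of 2] 1 by simp
      show ?thesis unfolding z T0 using Si 1 by simp
    next
      case 2
      have z: "(\<Sum>v\<in>WW m. T (0#v)) = 0" using Tj[of 0] 2 by simp
      show ?thesis unfolding z T0 using Si 2 by simp
    qed
  qed
  finally show ?thesis .
qed

end

context cmK begin

lemma K_approx2:
  assumes "e > 0"
  obtains N where "\<And>m f. N \<le> m \<Longrightarrow> L2 p f \<Longrightarrow> NN (\<lambda>x. Km p m f x - K f x) \<le> e * NN f"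
  using Kinf assms unfolding is_Kinf_def by blast

lemma K_lift:
  assumes i: "i \<in> {0,2}" and g: "L2 p g"
  shows "AE x in mu p. K (lift i g) x = inner_mu p phi (lift i g) * phi x + pw i * lift i (K g) x"
proof -
  define c where "c = inner_mu p phi (lift i g)"
  have Ll: "L2 p (lift i g)" by (rule L2_lift(1)[OF i g])
  have LlK: "L2 p (lift i (K g))" by (rule L2_lift(1)[OF i K_L2[OF g]])
  define D where "D = (\<lambda>x. K (lift i g) x - (c * phi x + pw i * lift i (K g) x))"
  have D: "L2 p D" unfolding D_def by (intro L2_diff L2_add L2_cmult K_L2 Ll LlK L2_phi)
  have ee: "NN D \<le> e * (NN (lift i g) + NN g)" if e: "e > 0" for e
  proof -
    obtain N where N: "\<And>m f. N \<le> m \<Longrightarrow> L2 p f \<Longrightarrow> NN (\<lambda>x. Km p m f x - K f x) \<le> e * NN f"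
      using K_approx2[OF e] by auto
    have Ld: "L2 p (\<lambda>x. Km p N g x - K g x)" by (intro L2_diff Km_L2 K_L2 g)
    have eq: "D = (\<lambda>x. (K (lift i g) x - Km p (Suc N) (lift i g) x) + pw i * lift i (\<lambda>x. Km p N g x - K g x) x)"
      unfolding D_def c_def by (auto simp: Km_lift[OF i g] lift_def algebra_simps)
    have "NN D \<le> NN (\<lambda>x. K (lift i g) x - Km p (Suc N) (lift i g) x) + NN (\<lambda>x. pw i * lift i (\<lambda>x. Km p N g x - K g x) x)"
      unfolding eq by (intro Mink L2_diff K_L2 Km_L2 Ll L2_cmult L2_lift(1)[OF i Ld])
    also have "NN (\<lambda>x. K (lift i g) x - Km p (Suc N) (lift i g) x) = NN (\<lambda>x. Km p (Suc N) (lift i g) x - K (lift i g) x)"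
      by (rule NN_commute)
    also have "\<dots> \<le> e * NN (lift i g)" by (rule N[OF _ Ll]) simp
    also have "NN (\<lambda>x. complex_of_real (pw i) * lift i (\<lambda>x. Km p N g x - K g x) x)
        = pw i * NN (lift i (\<lambda>x. Km p N g x - K g x))"
      using NN_cmult[of "complex_of_real (pw i)"] pw_pos(1)[of i] by (simp add: norm_of_real)
    also have "\<dots> \<le> 1 * NN (\<lambda>x. Km p N g x - K g x)"
      using pw_pos L2_lift(2)[OF i Ld] by (intro mult_mono NN_nonneg) auto
    also have "\<dots> \<le> e * NN g" using N[OF _ g] by simp
    finally show ?thesis by (simp add: algebra_simps)
  qed
  have "NN D \<le> 0"
    by (rule le_eps[OF ee]) (assumption, intro add_nonneg_nonneg NN_nonneg)
  then have "NN D = 0" using NN_nonneg[of D] by simp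
  then have "AE x in mu p. D x = 0" by (rule NN_zero_AE[OF D])
  then show ?thesis by eventually_elim (simp add: D_def c_def)
qed

end


lemma TT_Cw: "i \<in> {0,2} \<Longrightarrow> x \<in> Cw [i] \<Longrightarrow> TT i x \<in> Cantor"
  using TT_Sl Cantor_sub by (auto simp: Cw_Cons Cw_Nil)

context cmK begin

lemma lift_K_sol:
  assumes i: "i \<in> {0,2}" and s: "sol w g"
  shows "AE x in mu p. lift i (K g) x = w * lift i g x - indicator (Cw [i]) x"
proof -
  have "AE y in mu p. w * g y - K g y = phi y" using s by (simp add: sol_def)
  then have "AE x in mu p. x \<in> Cw [i] \<longrightarrow> w * g (TT i x) - K g (TT i x) = phi (TT i x)"
    by (rule AE_lift[OF i])
  then show ?thesis
  proof eventually_elim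
    case (elim x)
    show ?case
    proof (cases "x \<in> Cw [i]")
      case True
      then have "phi (TT i x) = 1" using TT_Cw[OF i] by (simp add: phi_def)
      then have "K g (TT i x) = w * g (TT i x) - 1" using elim True by (simp add: algebra_simps)
      then show ?thesis using True by (simp add: lift_def algebra_simps)
    next
      case False then show ?thesis by (simp add: lift_def)
    qed
  qed
qed

lemma main:
  assumes z: "kk + 1 < cmod z"
  shows "mfun p K z =
      mfun p K (z / p) / (1 - mfun p K (z / p))
    + mfun p K (z / (1 - p)) /
        ((1 - mfun p K (z / p)) * (1 - mfun p K (z / p) - mfun p K (z / (1 - p))))"
proof -
  have k0: "0 \<le> kk" by (rule kk(1))
  have pp: "0 < p" "p < 1" using p0 p1 by auto
  define w1 where "w1 = z / p"
  define w2 where "w2 = z / (1 - p)"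
  have nw1: "cmod w1 = cmod z / p" using pp by (simp add: w1_def norm_divide)
  have n1p: "cmod (1 - complex_of_real p) = 1 - p"
  proof -
    have "1 - complex_of_real p = complex_of_real (1 - p)" by simp
    then show ?thesis using pp by (simp only: norm_of_real)
  qed
  have nw2: "cmod w2 = cmod z / (1 - p)" using pp by (simp add: w2_def norm_divide n1p)
  have m1: "cmod z * p \<le> cmod z" by (rule mult_right_le_one_le) (use pp in auto)
  have m2: "cmod z * (1 - p) \<le> cmod z" by (rule mult_right_le_one_le) (use pp in auto)
  have zle1: "cmod z \<le> cmod z / p" using pp m1 by (simp add: le_divide_eq)
  have zle2: "cmod z \<le> cmod z / (1 - p)" using pp m2 by (simp add: le_divide_eq)
  have w1k: "kk < cmod w1" using z zle1 nw1 by simp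
  have w2k: "kk < cmod w2" using z zle2 nw2 by simp
  have zk: "kk < cmod z" using z by simp
  obtain g1 where s1: "sol w1 g1" using sol_exists[OF w1k] by blast
  obtain g2 where s2: "sol w2 g2" using sol_exists[OF w2k] by blast
  have g1: "L2 p g1" and g2: "L2 p g2" using s1 s2 by (auto simp: sol_def)
  define a where "a = inner_mu p phi g1"
  define b where "b = inner_mu p phi g2"
  have ma: "mfun p K (z / p) = a" using mfun_eq[OF w1k s1] by (simp add: a_def w1_def)
  have mb: "mfun p K (z / (1 - complex_of_real p)) = b" using mfun_eq[OF w2k s2] by (simp add: b_def w2_def)
  have alt: "cmod a < p"
  proof -
    have "cmod a \<le> 1 / (cmod w1 - kk)" using mfun_bound[OF w1k s1] ma by (simp add: w1_def)
    also have "\<dots> < p"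
    proof -
      have pos: "0 < cmod z / p - kk" using w1k nw1 by simp
      have "p * (cmod z / p - kk) = cmod z - p * kk" using pp by (simp add: field_simps)
      also have "\<dots> > 1" using z k0 pp by (smt (verit) mult_left_le_one_le)
      finally show ?thesis using pos nw1 by (simp add: divide_less_eq mult.commute)
    qed
    finally show ?thesis .
  qed
  have blt: "cmod b < 1 - p"
  proof -
    have "cmod b \<le> 1 / (cmod w2 - kk)" using mfun_bound[OF w2k s2] mb by (simp add: w2_def)
    also have "\<dots> < 1 - p"
    proof -
      have pos: "0 < cmod z / (1 - p) - kk" using w2k nw2 by simp
      have "(1 - p) * (cmod z / (1 - p) - kk) = cmod z - (1 - p) * kk" using pp by (simp add: field_simps)
      also have "\<dots> > 1" using z k0 pp by (smt (verit) mult_left_le_one_le)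
      finally show ?thesis using pos nw2 by (simp add: divide_less_eq mult.commute)
    qed
    finally show ?thesis .
  qed
  have ab1: "1 - a - b \<noteq> 0"
  proof
    assume "1 - a - b = 0"
    then have "a + b = 1" by (simp add: algebra_simps)
    then have "1 \<le> cmod a + cmod b" by (metis norm_one norm_triangle_ineq)
    then show False using alt blt by simp
  qed
  have a1: "1 - a \<noteq> 0"
  proof
    assume "1 - a = 0"
    then have "a = 1" by simp
    then show False using alt pp by simp
  qed
  define u where "u = 1 / (1 - a - b)"
  define H where "H = (\<lambda>x. (u / p) * lift 0 g1 x + (u / (1 - p)) * lift 2 g2 x)"
  have L0: "L2 p (lift 0 g1)" by (rule L2_lift(1)) (auto intro: g1)
  have L2': "L2 p (lift 2 g2)" by (rule L2_lift(1)) (auto intro: g2)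
  have LH: "L2 p H" unfolding H_def by (intro L2_add L2_cmult L0 L2')
  have ip0: "inner_mu p phi (lift 0 g1) = p * a"
    using inner_phi_lift[of 0, OF _ g1] by (simp add: a_def pw_def)
  have ip2: "inner_mu p phi (lift 2 g2) = (1 - p) * b"
    using inner_phi_lift[of 2, OF _ g2] by (simp add: b_def pw_def)
  have K0: "AE x in mu p. K (lift 0 g1) x = p * a * phi x + p * lift 0 (K g1) x"
    using K_lift[of 0, OF _ g1] ip0 by (simp add: pw_def)
  have K2: "AE x in mu p. K (lift 2 g2) x = (1 - p) * b * phi x + (1 - p) * lift 2 (K g2) x"
    using K_lift[of 2, OF _ g2] ip2 by (simp add: pw_def)
  have S0': "AE x in mu p. lift 0 (K g1) x = w1 * lift 0 g1 x - indicator (Cw [0]) x"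
    by (rule lift_K_sol[OF _ s1]) simp
  have S2': "AE x in mu p. lift 2 (K g2) x = w2 * lift 2 g2 x - indicator (Cw [2]) x"
    by (rule lift_K_sol[OF _ s2]) simp
  have KH: "AE x in mu p. K H x = (u / p) * K (lift 0 g1) x + (u / (1 - p)) * K (lift 2 g2) x"
    unfolding H_def by (rule K_lin[OF L0 L2'])
  have pz: "complex_of_real p \<noteq> 0" "1 - complex_of_real p \<noteq> 0" using pp n1p by auto
  have "AE x in mu p. z * H x - K H x = phi x"
    using KH K0 K2 S0' S2'
  proof eventually_elim
    case (elim x)
    define l0 where "l0 = lift 0 g1 x"
    define l2 where "l2 = lift 2 g2 x"
    define c0 where "c0 = (indicator (Cw [0]) x :: complex)"
    define c2 where "c2 = (indicator (Cw [2]) x :: complex)"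
    have cc: "c0 + c2 = phi x" unfolding c0_def c2_def phi_def by (rule Cantor_ind)
    have k0x: "K (lift 0 g1) x = p * a * phi x + p * (w1 * l0 - c0)"
      unfolding l0_def c0_def using elim(2) elim(4) by simp
    have k2x: "K (lift 2 g2) x = (1 - p) * b * phi x + (1 - p) * (w2 * l2 - c2)"
      unfolding l2_def c2_def using elim(3) elim(5) by simp
    have e1: "(u / p) * K (lift 0 g1) x = u * a * phi x + u * (w1 * l0 - c0)"
      unfolding k0x using pz(1) by (simp add: field_simps)
    have e2: "(u / (1 - p)) * K (lift 2 g2) x = u * b * phi x + u * (w2 * l2 - c2)"
      unfolding k2x using pz(2) by (simp add: field_simps)
    have kh: "K H x = (u * a * phi x + u * (w1 * l0 - c0)) + (u * b * phi x + u * (w2 * l2 - c2))"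
      unfolding elim(1) e1 e2 ..
    have e3: "z * H x = u * w1 * l0 + u * w2 * l2"
      using pz by (simp add: H_def l0_def l2_def w1_def w2_def field_simps)
    have "z * H x - K H x = u * (c0 + c2) - u * (a + b) * phi x"
      unfolding e3 kh by (simp add: algebra_simps)
    also have "\<dots> = u * (1 - a - b) * phi x" unfolding cc by (simp add: algebra_simps)
    also have "\<dots> = phi x" using ab1 by (simp add: u_def)
    finally show ?case .
  qed
  then have sH: "sol z H" using LH by (simp add: sol_def)
  have "mfun p K z = inner_mu p phi H" by (rule mfun_eq[OF zk sH])
  also have "\<dots> = (u / p) * inner_mu p phi (lift 0 g1) + (u / (1 - p)) * inner_mu p phi (lift 2 g2)"
    unfolding H_def by (rule inner_lin[OF L2_phi L0 L2'])
  also have "\<dots> = u * (a + b)" using pz by (simp add: ip0 ip2 field_simps)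
  also have "\<dots> = a / (1 - a) + b / ((1 - a) * (1 - a - b))"
  proof -
    obtain D1 D2 where D: "a = 1 - D1" "b = D1 - D2" "D1 \<noteq> 0" "D2 \<noteq> 0"
      using ab1 a1 by (intro that[of "1 - a" "1 - a - b"]) auto
    show ?thesis unfolding u_def D(1) D(2) using D(3,4) by (simp add: field_simps)
  qed
  finally show ?thesis by (simp add: ma mb)
qed

end

theorem theorem7p1:
  fixes p :: real and K :: "(real \<Rightarrow> complex) \<Rightarrow> (real \<Rightarrow> complex)" and z :: complex
  assumes "0 < p" and "p < 1"
    and "is_Kinf p K"
    and "norm z > opnorm p K + 1"
  shows "mfun p K z =
      mfun p K (z / p) / (1 - mfun p K (z / p))
    + mfun p K (z / (1 - p)) /
        ((1 - mfun p K (z / p)) * (1 - mfun p K (z / p) - mfun p K (z / (1 - p))))"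
proof -
  interpret cmK p K by unfold_locales (use assms in auto)
  show ?thesis using main assms(4) by (simp add: kk_def)
qed


end
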